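(* Let $X$ and $Y$ be sets, and let $\alpha$ be either an infinite cardinal or $0$. Then: (i) if $\aleph_0 \leq |X| < |Y|$ and $\alpha \in \{0, |Y|\}$, then every sequence of words (over a countable alphabet) that is universal for $I(X,\alpha)$ is also universal for $I(Y,\alpha)$; (ii) if $2^{\aleph_0} < |X| < |Y|$, $|X|$ is a regular cardinal, and either $\alpha < |X|$ or $\alpha \geq |Y|$, then every sequence of words (over a countable alphabet) that is universal for $I(Y,\alpha)$ is also universal for $I(X,\alpha)$.
   Context: For an alphabet $A$ (a finite or countable set), $A^+$ is the free semigroup of non-empty words over $A$. A sequence $w_1, w_2, \ldots \in A^+$ is universal for a semigroup $S$ if for every sequence $s_1, s_2, \ldots \in S$ there is a homomorphism $\phi: A^+ \to S$ with $(w_n)\phi = s_n$ for all $n \geq 1$. For a set $X$, $I(X)$ is the symmetric inverse monoid of all partial permutations of $X$ (bijections between subsets of $X$) under composition of binary relations. For $\alpha$ an infinite cardinal or $0$, $I(X,\alpha)$ is the inverse subsemigroup of $I(X)$ consisting of all partial permutations $f$ with $|X\setminus \operatorname{dom}(f)| \leq \alpha$ and $|X\setminus \operatorname{ran}(f)| \leq \alpha$. Thus $I(X,0)=\operatorname{Sym}(X)$ and $I(X,\alpha)=I(X)$ for $\alpha\ge |X|$. An infinite cardinal $\lambda$ is regular if it is not the union of fewer than $\lambda$ sets each of cardinality less than $\lambda$. *)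

theory Defs
  imports Main "HOL-Library.Countable_Set"
begin

text \<open>Partial permutations of X, represented as binary relations (graphs), composed
  as binary relations with relcomp (O), i.e. left to right as in the paper.\<close>
definition partial_perm :: "'x set \<Rightarrow> 'x rel \<Rightarrow> bool" where
  "partial_perm X f \<longleftrightarrow> f \<subseteq> X \<times> X \<and> single_valued f \<and> single_valued (f\<inverse>)"

text \<open>I(X, alpha), where the cardinal alpha is given as the cardinality of a set Al.\<close>
definition Ialpha :: "'x set \<Rightarrow> 'c set \<Rightarrow> 'x rel set" where
  "Ialpha X Al = {f. partial_perm X f
      \<and> ordLeq2 (card_of (X - Domain f)) (card_of Al)
      \<and> ordLeq2 (card_of (X - Range f)) (card_of Al)}"

definition word_seq :: "'a set \<Rightarrow> (nat \<Rightarrow> 'a list) \<Rightarrow> bool" where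
  "word_seq A w \<longleftrightarrow> (\<forall>n. w n \<noteq> [] \<and> set (w n) \<subseteq> A)"

definition semigroup_hom :: "'a set \<Rightarrow> 'x rel set \<Rightarrow> ('a list \<Rightarrow> 'x rel) \<Rightarrow> bool" where
  "semigroup_hom A S h \<longleftrightarrow>
     (\<forall>u. u \<noteq> [] \<and> set u \<subseteq> A \<longrightarrow> h u \<in> S) \<and>
     (\<forall>u v. u \<noteq> [] \<and> set u \<subseteq> A \<and> v \<noteq> [] \<and> set v \<subseteq> A \<longrightarrow> h (u @ v) = h u O h v)"

definition universal :: "'a set \<Rightarrow> (nat \<Rightarrow> 'a list) \<Rightarrow> 'x rel set \<Rightarrow> bool" where
  "universal A w S \<longleftrightarrow>
     (\<forall>s. (\<forall>n. s n \<in> S) \<longrightarrow> (\<exists>h. semigroup_hom A S h \<and> (\<forall>n. h (w n) = s n)))"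

definition regular_card :: "'x set \<Rightarrow> bool" where
  "regular_card X \<longleftrightarrow> infinite X \<and>
     (\<forall>F :: 'x set set. ordLess2 (card_of F) (card_of X)
        \<and> (\<forall>B\<in>F. ordLess2 (card_of B) (card_of X)) \<longrightarrow> \<Union>F \<noteq> X)"

end

theory Submission
  imports Defs
begin


definition cnj :: "('x \<Rightarrow> 'y) \<Rightarrow> 'x rel \<Rightarrow> 'y rel" where
  "cnj g r = map_prod g g ` r"

definition realizable :: "'a set \<Rightarrow> (nat \<Rightarrow> 'a list) \<Rightarrow> 'c set \<Rightarrow> 'x set \<Rightarrow> (nat \<Rightarrow> 'x rel) \<Rightarrow> bool" where
  "realizable A w Al S f \<longleftrightarrow> (\<exists>h. semigroup_hom A (Ialpha S Al) h \<and> (\<forall>n. h (w n) = f n))"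

lemma universalD: "universal A w (Ialpha S Al) \<Longrightarrow> (\<forall>n. f n \<in> Ialpha S Al) \<Longrightarrow> realizable A w Al S f"
  unfolding universal_def realizable_def by blast

lemma universalI: "(\<And>f. \<forall>n. f n \<in> Ialpha S Al \<Longrightarrow> realizable A w Al S f) \<Longrightarrow> universal A w (Ialpha S Al)"
  unfolding universal_def realizable_def by blast

lemma conj_mem: "(a,b) \<in> cnj g r \<longleftrightarrow> (\<exists>x y. (x,y) \<in> r \<and> a = g x \<and> b = g y)"
  unfolding cnj_def by force

lemma conj_comp:
  assumes "inj_on g S" "r \<subseteq> S \<times> S" "r' \<subseteq> S \<times> S"
  shows "cnj g (r O r') = cnj g r O cnj g r'"
proof
  show "cnj g (r O r') \<subseteq> cnj g r O cnj g r'"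
    unfolding cnj_def by force
  show "cnj g r O cnj g r' \<subseteq> cnj g (r O r')"
  proof
    fix p assume "p \<in> cnj g r O cnj g r'"
    then obtain a b c where p: "p = (a,c)" "(a,b) \<in> cnj g r" "(b,c) \<in> cnj g r'" by auto
    then obtain x y y' z where "(x,y) \<in> r" "(y',z) \<in> r'" "a = g x" "b = g y" "b = g y'" "c = g z"
      by (auto simp: conj_mem)
    moreover have "y = y'" using calculation assms by (meson SigmaD2 SigmaD1 inj_onD subsetD)
    ultimately show "p \<in> cnj g (r O r')" using p by (auto simp: conj_mem)
  qed
qed

lemma conj_conj: "cnj f (cnj g r) = cnj (f \<circ> g) r"
  unfolding cnj_def by (simp only: image_comp map_prod.comp)

lemma conj_id_on: 
  assumes "r \<subseteq> S \<times> S" "\<And>x. x \<in> S \<Longrightarrow> g x = x" shows "cnj g r = r"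
proof -
  have e: "map_prod g g p = p" if "p \<in> r" for p using that assms by (cases p) auto
  have "map_prod g g ` r = (\<lambda>p. p) ` r" by (rule image_cong) (simp_all add: e)
  thus ?thesis unfolding cnj_def by simp
qed

lemma conj_sub: "bij_betw g S T \<Longrightarrow> r \<subseteq> S \<times> S \<Longrightarrow> cnj g r \<subseteq> T \<times> T"
  unfolding cnj_def bij_betw_def by force

lemma conj_Domain: "Domain (cnj g r) = g ` Domain r"
  unfolding cnj_def by force
lemma conj_Range: "Range (cnj g r) = g ` Range r"
  unfolding cnj_def by force

lemma conj_pp:
  assumes "bij_betw g S T" "partial_perm S r"
  shows "partial_perm T (cnj g r)"
proof -
  have inj: "inj_on g S" and sub: "r \<subseteq> S \<times> S" using assms unfolding bij_betw_def partial_perm_def by auto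
  have "single_valued (cnj g r)"
    unfolding single_valued_def
  proof (intro allI impI)
    fix a b c assume "(a,b) \<in> cnj g r" "(a,c) \<in> cnj g r"
    then obtain x y x' y' where "(x,y) \<in> r" "(x',y') \<in> r" "a = g x" "b = g y" "a = g x'" "c = g y'"
      by (auto simp: conj_mem)
    moreover from calculation have "x = x'" using inj sub by (meson SigmaD1 inj_onD subsetD)
    ultimately show "b = c" using assms(2) unfolding partial_perm_def single_valued_def by auto
  qed
  moreover have "single_valued ((cnj g r)\<inverse>)"
    unfolding single_valued_def
  proof (intro allI impI)
    fix a b c assume "(a,b) \<in> (cnj g r)\<inverse>" "(a,c) \<in> (cnj g r)\<inverse>"
    then obtain x y x' y' where "(y,x) \<in> r" "(y',x') \<in> r" "a = g x" "b = g y" "a = g x'" "c = g y'"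
      by (auto simp: conj_mem)
    moreover from calculation have "x = x'" using inj sub by (meson SigmaD2 inj_onD subsetD)
    moreover have "single_valued (r\<inverse>)" using assms(2) unfolding partial_perm_def by auto
    ultimately have "y = y'" unfolding single_valued_def by (metis converseI)
    thus "b = c" using \<open>b = g y\<close> \<open>c = g y'\<close> by simp
  qed
  ultimately show ?thesis using conj_sub[OF assms(1) sub] unfolding partial_perm_def by auto
qed

lemma bij_diff_card:
  assumes "bij_betw g S T" "D \<subseteq> S"
  shows "ordIso2 (card_of (T - g ` D)) (card_of (S - D))"
proof -
  have "T - g ` D = g ` (S - D)" using assms unfolding bij_betw_def inj_on_def by auto
  moreover have "bij_betw g (S - D) (g ` (S - D))"
    using assms unfolding bij_betw_def by (meson Diff_subset inj_on_subset)
  ultimately show ?thesis using card_of_ordIsoI ordIso_symmetric by metis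
qed

lemma conj_Ialpha:
  assumes "bij_betw g S T" "r \<in> Ialpha S Al"
  shows "cnj g r \<in> Ialpha T Al"
proof -
  have pp: "partial_perm S r" using assms(2) unfolding Ialpha_def by auto
  hence sub: "r \<subseteq> S \<times> S" unfolding partial_perm_def by auto
  have "ordLeq2 (card_of (T - Domain (cnj g r))) (card_of Al)"
    unfolding conj_Domain
    using bij_diff_card[OF assms(1), of "Domain r"] sub assms(2) unfolding Ialpha_def
    using ordIso_ordLeq_trans by blast
  moreover have "ordLeq2 (card_of (T - Range (cnj g r))) (card_of Al)"
    unfolding conj_Range
    using bij_diff_card[OF assms(1), of "Range r"] sub assms(2) unfolding Ialpha_def
    using ordIso_ordLeq_trans by blast
  ultimately show ?thesis using conj_pp[OF assms(1) pp] unfolding Ialpha_def by auto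
qed

lemma Ialpha_sub: "r \<in> Ialpha S Al \<Longrightarrow> r \<subseteq> S \<times> S"
  unfolding Ialpha_def partial_perm_def by auto

lemma realizable_iso:
  assumes "realizable A w Al S f" "bij_betw g S T"
  shows "realizable A w Al T (\<lambda>n. cnj g (f n))"
proof -
  obtain h where h: "semigroup_hom A (Ialpha S Al) h" "\<forall>n. h (w n) = f n"
    using assms(1) unfolding realizable_def by auto
  have inj: "inj_on g S" using assms(2) bij_betw_def by auto
  have "semigroup_hom A (Ialpha T Al) (\<lambda>u. cnj g (h u))"
    unfolding semigroup_hom_def
  proof (intro conjI allI impI)
    fix u assume "u \<noteq> [] \<and> set u \<subseteq> A"
    hence "h u \<in> Ialpha S Al" using h(1) unfolding semigroup_hom_def by blast
    thus "cnj g (h u) \<in> Ialpha T Al" using conj_Ialpha[OF assms(2)] by blast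
  next
    fix u v assume uv: "u \<noteq> [] \<and> set u \<subseteq> A \<and> v \<noteq> [] \<and> set v \<subseteq> A"
    hence "h (u @ v) = h u O h v" "h u \<in> Ialpha S Al" "h v \<in> Ialpha S Al"
      using h(1) unfolding semigroup_hom_def by auto
    thus "cnj g (h (u @ v)) = cnj g (h u) O cnj g (h v)"
      using conj_comp[OF inj Ialpha_sub[of "h u"] Ialpha_sub[of "h v"]] by simp
  qed
  thus ?thesis unfolding realizable_def using h(2) by auto
qed

lemma universal_transfer:
  assumes "universal A w (Ialpha S Al)" "bij_betw g S T"
  shows "universal A w (Ialpha T Al)"
proof (rule universalI)
  fix f' :: "nat \<Rightarrow> _" assume f': "\<forall>n. f' n \<in> Ialpha T Al"
  let ?g' = "inv_into S g"
  have b': "bij_betw ?g' T S" using assms(2) by (rule bij_betw_inv_into)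
  have "realizable A w Al S (\<lambda>n. cnj ?g' (f' n))"
    by (rule universalD[OF assms(1)]) (simp add: conj_Ialpha[OF b'] f')
  from realizable_iso[OF this assms(2)]
  have "realizable A w Al T (\<lambda>n. cnj g (cnj ?g' (f' n)))" .
  moreover have "cnj g (cnj ?g' (f' n)) = f' n" for n
  proof -
    have "cnj g (cnj ?g' (f' n)) = cnj (g \<circ> ?g') (f' n)" by (rule conj_conj)
    also have "\<dots> = f' n"
      using Ialpha_sub f' assms(2) by (intro conj_id_on[where S=T]) (auto simp: bij_betw_inv_into_right)
    finally show ?thesis .
  qed
  ultimately show "realizable A w Al T f'" by simp
qed




lemma shomD: "semigroup_hom A S h \<Longrightarrow> u \<noteq> [] \<Longrightarrow> set u \<subseteq> A \<Longrightarrow> h u \<in> S"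
  unfolding semigroup_hom_def by blast

lemma shomD2: "semigroup_hom A S h \<Longrightarrow> u \<noteq> [] \<Longrightarrow> set u \<subseteq> A \<Longrightarrow> v \<noteq> [] \<Longrightarrow> set v \<subseteq> A
   \<Longrightarrow> h (u @ v) = h u O h v"
  unfolding semigroup_hom_def by blast

lemma restrict_inv_comp:
  assumes "\<And>p q. (p,q) \<in> r \<Longrightarrow> (p \<in> Z \<longleftrightarrow> q \<in> Z)"
  shows "(r O r') \<inter> Z \<times> Z = (r \<inter> Z \<times> Z) O (r' \<inter> Z \<times> Z)"
  using assms by blast

lemma restrict_Ialpha:
  assumes "r \<in> Ialpha S Al" "Z \<subseteq> S" "\<And>p q. (p,q) \<in> r \<Longrightarrow> (p \<in> Z \<longleftrightarrow> q \<in> Z)"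
  shows "r \<inter> Z \<times> Z \<in> Ialpha Z Al"
proof -
  have pp: "partial_perm S r" and d: "ordLeq2 (card_of (S - Domain r)) (card_of Al)"
    and rr: "ordLeq2 (card_of (S - Range r)) (card_of Al)"
    using assms(1) unfolding Ialpha_def by auto
  have sv: "single_valued r" "single_valued (r\<inverse>)" using pp unfolding partial_perm_def by auto
  have "single_valued (r \<inter> Z \<times> Z)" using sv(1) unfolding single_valued_def by blast
  moreover have "single_valued ((r \<inter> Z \<times> Z)\<inverse>)" using sv(2) unfolding single_valued_def by blast
  ultimately have pz: "partial_perm Z (r \<inter> Z \<times> Z)" unfolding partial_perm_def by blast
  have s1: "Z - Domain (r \<inter> Z \<times> Z) \<subseteq> S - Domain r"
  proof
    fix z assume z: "z \<in> Z - Domain (r \<inter> Z \<times> Z)"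
    show "z \<in> S - Domain r"
    proof (rule ccontr)
      assume "z \<notin> S - Domain r"
      then obtain y where "(z,y) \<in> r" using z assms(2) by blast
      moreover hence "y \<in> Z" using assms(3)[of z y] z by blast
      ultimately show False using z by blast
    qed
  qed
  have s2: "Z - Range (r \<inter> Z \<times> Z) \<subseteq> S - Range r"
  proof
    fix z assume z: "z \<in> Z - Range (r \<inter> Z \<times> Z)"
    show "z \<in> S - Range r"
    proof (rule ccontr)
      assume "z \<notin> S - Range r"
      then obtain y where "(y,z) \<in> r" using z assms(2) by blast
      moreover hence "y \<in> Z" using assms(3)[of y z] z by blast
      ultimately show False using z by blast
    qed
  qed
  have "ordLeq2 (card_of (Z - Domain (r \<inter> Z \<times> Z))) (card_of Al)"
    using ordLeq_transitive[OF card_of_mono1[OF s1] d] .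
  moreover have "ordLeq2 (card_of (Z - Range (r \<inter> Z \<times> Z))) (card_of Al)"
    using ordLeq_transitive[OF card_of_mono1[OF s2] rr] .
  ultimately show ?thesis using pz unfolding Ialpha_def by simp
qed

lemma restrict_hom:
  assumes h: "semigroup_hom A (Ialpha S Al) h" and Z: "Z \<subseteq> S"
    and inv: "\<And>u p q. u \<noteq> [] \<Longrightarrow> set u \<subseteq> A \<Longrightarrow> (p,q) \<in> h u \<Longrightarrow> (p \<in> Z \<longleftrightarrow> q \<in> Z)"
  shows "semigroup_hom A (Ialpha Z Al) (\<lambda>u. h u \<inter> Z \<times> Z)"
  unfolding semigroup_hom_def
proof (intro conjI allI impI)
  fix u assume u: "u \<noteq> [] \<and> set u \<subseteq> A"
  hence "h u \<in> Ialpha S Al" using shomD[OF h] by blast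
  moreover have "\<And>p q. (p,q) \<in> h u \<Longrightarrow> (p \<in> Z \<longleftrightarrow> q \<in> Z)" using inv u by blast
  ultimately show "h u \<inter> Z \<times> Z \<in> Ialpha Z Al" using restrict_Ialpha[OF _ Z] by blast
next
  fix u v assume uv: "u \<noteq> [] \<and> set u \<subseteq> A \<and> v \<noteq> [] \<and> set v \<subseteq> A"
  hence e: "h (u @ v) = h u O h v" using shomD2[OF h] by blast
  have "\<And>p q. (p,q) \<in> h u \<Longrightarrow> (p \<in> Z \<longleftrightarrow> q \<in> Z)" using inv uv by blast
  thus "h (u @ v) \<inter> Z \<times> Z = (h u \<inter> Z \<times> Z) O (h v \<inter> Z \<times> Z)"
    unfolding e by (rule restrict_inv_comp)
qed

lemma glue_hom:
  assumes Bsub: "\<forall>q\<in>Q. B q \<subseteq> Y" and cover: "Y = (\<Union>q\<in>Q. B q)"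
    and disj: "\<forall>q\<in>Q. \<forall>q'\<in>Q. q \<noteq> q' \<longrightarrow> B q \<inter> B q' = {}"
    and hs: "\<forall>q\<in>Q. semigroup_hom A (Ialpha (B q) Al) (H q)"
    and al: "Al = {} \<or> ordLeq2 (card_of Y) (card_of Al)"
  shows "semigroup_hom A (Ialpha Y Al) (\<lambda>u. \<Union>q\<in>Q. H q u)"
  unfolding semigroup_hom_def
proof (intro conjI allI impI)
  fix u assume u: "u \<noteq> [] \<and> set u \<subseteq> A"
  have Hq: "H q u \<in> Ialpha (B q) Al" if "q \<in> Q" for q using shomD[OF hs[rule_format, OF that]] u by blast
  have Hsub: "H q u \<subseteq> B q \<times> B q" if "q \<in> Q" for q using Ialpha_sub[OF Hq[OF that]] .
  have pq: "partial_perm (B q) (H q u)" if "q \<in> Q" for q using Hq[OF that] unfolding Ialpha_def by blast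
  let ?U = "\<Union>q\<in>Q. H q u"
  have sub: "?U \<subseteq> Y \<times> Y" using Hsub Bsub by blast
  have sv: "single_valued ?U"
    unfolding single_valued_def
  proof (intro allI impI)
    fix a b c assume "(a,b) \<in> ?U" "(a,c) \<in> ?U"
    then obtain q q' where q: "q \<in> Q" "q' \<in> Q" "(a,b) \<in> H q u" "(a,c) \<in> H q' u" by blast
    hence "a \<in> B q" "a \<in> B q'" using Hsub by blast+
    hence "q = q'" using disj q by blast
    thus "b = c" using q pq unfolding partial_perm_def single_valued_def by blast
  qed
  have sv2: "single_valued (?U\<inverse>)"
    unfolding single_valued_def
  proof (intro allI impI)
    fix a b c assume "(a,b) \<in> ?U\<inverse>" "(a,c) \<in> ?U\<inverse>"
    then obtain q q' where q: "q \<in> Q" "q' \<in> Q" "(b,a) \<in> H q u" "(c,a) \<in> H q' u" by blast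
    hence "a \<in> B q" "a \<in> B q'" using Hsub by blast+
    hence "q = q'" using disj q by blast
    thus "b = c" using q pq unfolding partial_perm_def single_valued_def by blast
  qed
  have bound: "ordLeq2 (card_of (Y - D)) (card_of Al)"
    if DD: "\<forall>q\<in>Q. ordLeq2 (card_of (B q - DD q)) (card_of Al)" and DU: "\<forall>q\<in>Q. DD q \<subseteq> D" for D DD
  proof (cases "Al = {}")
    case True
    have "B q - DD q = {}" if "q \<in> Q" for q using DD that True card_of_empty3 by blast
    hence "Y - D = {}" using cover DU by blast
    thus ?thesis by (simp only: card_of_empty)
  next
    case False
    hence "ordLeq2 (card_of Y) (card_of Al)" using al by blast
    thus ?thesis using card_of_mono1[of "Y - D" Y] ordLeq_transitive by blast
  qed
  have d: "ordLeq2 (card_of (Y - Domain ?U)) (card_of Al)"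
    by (rule bound[of "\<lambda>q. Domain (H q u)"]) (use Hq in \<open>auto simp: Ialpha_def\<close>)
  have r: "ordLeq2 (card_of (Y - Range ?U)) (card_of Al)"
    by (rule bound[of "\<lambda>q. Range (H q u)"]) (use Hq in \<open>auto simp: Ialpha_def\<close>)
  show "?U \<in> Ialpha Y Al" unfolding Ialpha_def partial_perm_def using sub sv sv2 d r by blast
next
  fix u v assume uv: "u \<noteq> [] \<and> set u \<subseteq> A \<and> v \<noteq> [] \<and> set v \<subseteq> A"
  have e: "H q (u @ v) = H q u O H q v" if "q \<in> Q" for q using shomD2[OF hs[rule_format, OF that]] uv by blast
  have s1: "H q u \<subseteq> B q \<times> B q" if "q \<in> Q" for q 
    using Ialpha_sub[OF shomD[OF hs[rule_format, OF that]]] uv by blast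
  have s2: "H q v \<subseteq> B q \<times> B q" if "q \<in> Q" for q
    using Ialpha_sub[OF shomD[OF hs[rule_format, OF that]]] uv by blast
  show "(\<Union>q\<in>Q. H q (u @ v)) = (\<Union>q\<in>Q. H q u) O (\<Union>q\<in>Q. H q v)"
  proof
    show "(\<Union>q\<in>Q. H q (u @ v)) \<subseteq> (\<Union>q\<in>Q. H q u) O (\<Union>q\<in>Q. H q v)"
    proof
      fix p assume "p \<in> (\<Union>q\<in>Q. H q (u @ v))"
      then obtain q where q: "q \<in> Q" "p \<in> H q (u @ v)" by blast
      hence "p \<in> H q u O H q v" using e by simp
      thus "p \<in> (\<Union>q\<in>Q. H q u) O (\<Union>q\<in>Q. H q v)" using q(1) by blast
    qed
  next
    show "(\<Union>q\<in>Q. H q u) O (\<Union>q\<in>Q. H q v) \<subseteq> (\<Union>q\<in>Q. H q (u @ v))"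
    proof
      fix p assume "p \<in> (\<Union>q\<in>Q. H q u) O (\<Union>q\<in>Q. H q v)"
      then obtain a b c q q' where p: "p = (a,c)" "q \<in> Q" "q' \<in> Q" "(a,b) \<in> H q u" "(b,c) \<in> H q' v" by blast
      have "b \<in> B q" using s1[OF p(2)] p(4) by blast
      moreover have "b \<in> B q'" using s2[OF p(3)] p(5) by blast
      ultimately have "q = q'" using disj p(2,3) by blast
      hence "p \<in> H q u O H q v" using p by blast
      thus "p \<in> (\<Union>q\<in>Q. H q (u @ v))" using p(2) e[OF p(2)] by blast
    qed
  qed
qed

subsection \<open>Components\<close>

definition Rel :: "(nat \<Rightarrow> 'x rel) \<Rightarrow> 'x rel" where
  "Rel f = (\<Union>n. f n \<union> (f n)\<inverse>)"

definition cmp :: "(nat \<Rightarrow> 'x rel) \<Rightarrow> 'x \<Rightarrow> 'x set" where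
  "cmp f x = (Rel f)\<^sup>* `` {x}"

lemma cmp_self: "x \<in> cmp f x"
  unfolding cmp_def by simp

lemma sym_Rel: "sym (Rel f)"
  unfolding Rel_def sym_def by auto

lemma cmp_sym: "y \<in> cmp f x \<Longrightarrow> x \<in> cmp f y"
proof -
  assume "y \<in> cmp f x"
  hence "(x,y) \<in> (Rel f)\<^sup>*" unfolding cmp_def by simp
  hence "(y,x) \<in> (Rel f)\<^sup>*" using sym_rtrancl[OF sym_Rel, of f] by (rule symD[rotated])
  thus "x \<in> cmp f y" unfolding cmp_def by simp
qed

lemma cmp_eq: "y \<in> cmp f x \<Longrightarrow> cmp f y = cmp f x"
proof -
  assume a: "y \<in> cmp f x"
  hence xy: "(x,y) \<in> (Rel f)\<^sup>*" unfolding cmp_def by simp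
  have yx: "(y,x) \<in> (Rel f)\<^sup>*" using cmp_sym[OF a] unfolding cmp_def by simp
  show ?thesis
  proof
    show "cmp f y \<subseteq> cmp f x"
    proof
      fix z assume "z \<in> cmp f y"
      hence "(y,z) \<in> (Rel f)\<^sup>*" unfolding cmp_def by simp
      hence "(x,z) \<in> (Rel f)\<^sup>*" using xy by (rule rtrancl_trans[rotated])
      thus "z \<in> cmp f x" unfolding cmp_def by simp
    qed
  next
    show "cmp f x \<subseteq> cmp f y"
    proof
      fix z assume "z \<in> cmp f x"
      hence "(x,z) \<in> (Rel f)\<^sup>*" unfolding cmp_def by simp
      hence "(y,z) \<in> (Rel f)\<^sup>*" using yx by (rule rtrancl_trans[rotated])
      thus "z \<in> cmp f y" unfolding cmp_def by simp
    qed
  qed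
qed

lemma cmp_disj: "z \<in> cmp f x \<Longrightarrow> z \<in> cmp f y \<Longrightarrow> cmp f x = cmp f y"
  using cmp_eq[of z f x] cmp_eq[of z f y] by simp

lemma cmp_step: "(x,y) \<in> f n \<Longrightarrow> y \<in> cmp f x"
proof -
  assume "(x,y) \<in> f n"
  hence "(x,y) \<in> Rel f" unfolding Rel_def by blast
  thus ?thesis unfolding cmp_def by auto
qed

lemma cmp_step': "(x,y) \<in> f n \<Longrightarrow> cmp f y = cmp f x"
  using cmp_step[of x y f n] cmp_eq[of y f x] by simp

lemma cmp_sub:
  assumes "\<forall>n. f n \<subseteq> S \<times> S" "x \<in> S"
  shows "cmp f x \<subseteq> S"
proof
  fix y assume "y \<in> cmp f x"
  hence "(x,y) \<in> (Rel f)\<^sup>*" unfolding cmp_def by blast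
  thus "y \<in> S"
  proof (induction rule: rtrancl_induct)
    case base thus ?case using assms by simp
  next
    case (step y z) thus ?case using assms unfolding Rel_def by blast
  qed
qed

lemma sv_countable:
  assumes "single_valued r" shows "countable (r `` {a})"
proof (cases "a \<in> Domain r")
  case True
  then obtain b where b: "(a,b) \<in> r" by blast
  hence "r `` {a} = {b}" using assms unfolding single_valued_def by blast
  thus ?thesis by simp
next
  case False
  hence "r `` {a} = {}" by blast
  thus ?thesis by simp
qed

lemma cmp_countable:
  assumes "\<forall>n. single_valued (f n) \<and> single_valued ((f n)\<inverse>)"
  shows "countable (cmp f x)"
proof -
  have one: "countable (Rel f `` {a})" for a
  proof -
    have "Rel f `` {a} = (\<Union>n. f n `` {a} \<union> (f n)\<inverse> `` {a})" unfolding Rel_def by blast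
    moreover have "countable (\<Union>n. f n `` {a} \<union> (f n)\<inverse> `` {a})"
      using assms by (intro countable_UN countable_Un sv_countable) auto
    ultimately show ?thesis by simp
  qed
  have k: "countable ((Rel f ^^ k) `` {x})" for k
  proof (induction k)
    case 0 thus ?case by simp
  next
    case (Suc k)
    have "(Rel f ^^ Suc k) `` {x} = (\<Union>y\<in>(Rel f ^^ k) `` {x}. Rel f `` {y})"
      by (simp only: relpow.simps relcomp_Image) (rule Image_eq_UN)
    moreover have "countable (\<Union>y\<in>(Rel f ^^ k) `` {x}. Rel f `` {y})"
      using Suc one by (intro countable_UN) auto
    ultimately show ?case by simp
  qed
  have "cmp f x = (\<Union>k. (Rel f ^^ k) `` {x})" unfolding cmp_def rtrancl_is_UN_relpow by blast
  moreover have "countable (\<Union>k. (Rel f ^^ k) `` {x})" using k by (intro countable_UN) auto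
  ultimately show ?thesis by simp
qed

lemma cmp_union_inv:
  assumes U: "\<forall>x\<in>U. cmp f x \<subseteq> U" and r: "(x,y) \<in> f n"
  shows "x \<in> U \<longleftrightarrow> y \<in> U"
proof
  assume "x \<in> U" thus "y \<in> U" using U cmp_step[of x y f n, OF r] by blast
next
  assume "y \<in> U" 
  hence "cmp f y \<subseteq> U" using U by blast
  thus "x \<in> U" using cmp_step'[of x y f n, OF r] cmp_self[of x f] by blast
qed




lemma countable_le_nat: "countable S \<Longrightarrow> ordLeq2 (card_of S) (card_of (UNIV::nat set))"
  by (auto simp: countable_def intro: card_of_ordLeqI)

lemma nat_le_inf: "infinite X \<Longrightarrow> ordLeq2 (card_of (UNIV::nat set)) (card_of X)"
  using infinite_iff_card_of_nat by blast

lemma countable_le_inf: "countable S \<Longrightarrow> infinite X \<Longrightarrow> ordLeq2 (card_of S) (card_of X)"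
  using ordLeq_transitive[OF countable_le_nat nat_le_inf] .

lemma ord_refl: "ordLeq2 (card_of X) (card_of X)"
  by (rule ordIso_imp_ordLeq[OF card_of_refl])

lemma ordIso_bijE: "ordIso2 (card_of A) (card_of B) \<Longrightarrow> (\<And>f. bij_betw f A B \<Longrightarrow> thesis) \<Longrightarrow> thesis"
  using card_of_ordIso[of A B] by blast

lemma Ialpha_sv: "r \<in> Ialpha S Al \<Longrightarrow> single_valued r \<and> single_valued (r\<inverse>)"
  unfolding Ialpha_def partial_perm_def by blast

lemma part_i:
  fixes X :: "'x set" and Y :: "'y set" and Al :: "'c set"
  assumes inf: "infinite X" and less: "ordLess2 (card_of X) (card_of Y)"
    and al: "Al = {} \<or> ordIso2 (card_of Al) (card_of Y)"
    and U: "universal A w (Ialpha X Al)"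
  shows "universal A w (Ialpha Y Al)"
proof (rule universalI)
  fix f :: "nat \<Rightarrow> 'y rel" assume f: "\<forall>n. f n \<in> Ialpha Y Al"
  have fsub: "\<forall>n. f n \<subseteq> Y \<times> Y" using f Ialpha_sub by blast
  have fsv: "\<forall>n. single_valued (f n) \<and> single_valued ((f n)\<inverse>)" using f Ialpha_sv by blast
  define Q where "Q = cmp f ` Y"
  have cQ: "countable c" if c: "c \<in> Q" for c
  proof -
    obtain y where "c = cmp f y" using c unfolding Q_def by blast
    thus ?thesis using cmp_countable[OF fsv] by simp
  qed
  have Qsub: "c \<subseteq> Y" if c: "c \<in> Q" for c
  proof -
    obtain y where "c = cmp f y" "y \<in> Y" using c unfolding Q_def by blast
    thus ?thesis using cmp_sub[OF fsub] by simp
  qed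
  have Qdisj: "c = c'" if c: "c \<in> Q" "c' \<in> Q" "z \<in> c" "z \<in> c'" for c c' z
  proof -
    obtain y y' where "c = cmp f y" "c' = cmp f y'" using c unfolding Q_def by blast
    thus ?thesis using cmp_disj[of z f y y'] c by simp
  qed
  have YQ: "ordLeq2 (card_of Y) (card_of (Q \<times> (UNIV::nat set)))"
  proof (rule card_of_ordLeqI[of "\<lambda>y. (cmp f y, to_nat_on (cmp f y) y)"])
    show "inj_on (\<lambda>y. (cmp f y, to_nat_on (cmp f y) y)) Y"
    proof (rule inj_onI)
      fix y y' assume "y \<in> Y" "y' \<in> Y" and e: "(cmp f y, to_nat_on (cmp f y) y) = (cmp f y', to_nat_on (cmp f y') y')"
      hence e1: "cmp f y = cmp f y'" and e2: "to_nat_on (cmp f y) y = to_nat_on (cmp f y) y'" by auto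
      have a: "y \<in> cmp f y" by (rule cmp_self)
      have b: "y' \<in> cmp f y" unfolding e1 by (rule cmp_self)
      have inj: "inj_on (to_nat_on (cmp f y)) (cmp f y)" by (rule inj_on_to_nat_on[OF cmp_countable[OF fsv]])
      show "y = y'" by (rule inj_onD[OF inj e2 a b])
    qed
  next
    fix y assume "y \<in> Y" thus "(cmp f y, to_nat_on (cmp f y) y) \<in> Q \<times> UNIV" unfolding Q_def by blast
  qed
  have XQ: "ordLess2 (card_of X) (card_of Q)"
  proof (rule ccontr)
    assume "\<not> ordLess2 (card_of X) (card_of Q)"
    hence QX: "ordLeq2 (card_of Q) (card_of X)" 
      using not_ordLess_iff_ordLeq[OF card_of_Well_order card_of_Well_order, of X Q] by simp
    have "ordLeq2 (card_of (Sigma Q (\<lambda>_. (UNIV::nat set)))) (card_of X)"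
      by (rule card_of_Sigma_ordLeq_infinite[OF inf QX]) (simp add: nat_le_inf[OF inf])
    hence "ordLeq2 (card_of Y) (card_of X)" by (rule ordLeq_transitive[OF YQ])
    thus False using not_ordLess_ordLeq[OF less] by simp
  qed
  have infQ: "infinite Q" using card_of_ordLeq_finite[OF ordLess_imp_ordLeq[OF XQ]] inf by blast
  have Xne: "X \<noteq> {}" using inf by auto
  have "ordIso2 (card_of (Q \<times> X)) (card_of Q)"
    using card_of_Times_infinite[OF infQ Xne ordLess_imp_ordLeq[OF XQ]] by blast
  then obtain \<beta> where \<beta>: "bij_betw \<beta> (Q \<times> X) Q" by (rule ordIso_bijE)
  have \<beta>Q: "\<beta> (q,x) \<in> Q" if "q \<in> Q" "x \<in> X" for q x using \<beta> that unfolding bij_betw_def by blast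
  have \<beta>inj: "(q,x) = (q',x')" if "q \<in> Q" "x \<in> X" "q' \<in> Q" "x' \<in> X" "\<beta> (q,x) = \<beta> (q',x')" for q x q' x'
    using \<beta> that unfolding bij_betw_def inj_on_def by blast
  define B where "B q = (\<Union>x\<in>X. \<beta> (q,x))" for q
  have Bsub: "\<forall>q\<in>Q. B q \<subseteq> Y" unfolding B_def using \<beta>Q Qsub by blast
  have cover: "Y = (\<Union>q\<in>Q. B q)"
  proof
    show "Y \<subseteq> (\<Union>q\<in>Q. B q)"
    proof
      fix y assume y: "y \<in> Y"
      hence "cmp f y \<in> \<beta> ` (Q \<times> X)" using \<beta> unfolding bij_betw_def Q_def by blast
      then obtain q x where "q \<in> Q" "x \<in> X" "cmp f y = \<beta> (q,x)" by blast
      thus "y \<in> (\<Union>q\<in>Q. B q)" using cmp_self[of y f] unfolding B_def by blast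
    qed
  qed (use Bsub in blast)
  have disj: "\<forall>q\<in>Q. \<forall>q'\<in>Q. q \<noteq> q' \<longrightarrow> B q \<inter> B q' = {}"
  proof (intro ballI impI)
    fix q q' assume q: "q \<in> Q" "q' \<in> Q" "q \<noteq> q'"
    show "B q \<inter> B q' = {}"
    proof (rule ccontr)
      assume "B q \<inter> B q' \<noteq> {}"
      then obtain z x x' where z: "x \<in> X" "x' \<in> X" "z \<in> \<beta> (q,x)" "z \<in> \<beta> (q',x')" unfolding B_def by blast
      hence "\<beta> (q,x) = \<beta> (q',x')" using Qdisj \<beta>Q q by blast
      hence "(q,x) = (q',x')" using \<beta>inj q z by blast
      thus False using q by simp
    qed
  qed
  have closed: "\<forall>z\<in>B q. cmp f z \<subseteq> B q" if qQ: "q \<in> Q" for q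
  proof
    fix z assume "z \<in> B q"
    then obtain x where x: "x \<in> X" "z \<in> \<beta> (q,x)" unfolding B_def by blast
    then obtain y where "\<beta> (q,x) = cmp f y" using \<beta>Q[OF qQ x(1)] unfolding Q_def by blast
    hence "cmp f z = \<beta> (q,x)" using cmp_eq[of z f y] x(2) by simp
    thus "cmp f z \<subseteq> B q" using x(1) unfolding B_def by blast
  qed
  have Bcard: "ordIso2 (card_of (B q)) (card_of X)" if q: "q \<in> Q" for q
  proof -
    have "ordLeq2 (card_of (B q)) (card_of X)"
      unfolding B_def
      by (rule card_of_UNION_ordLeq_infinite[OF inf ord_refl])
        (use cQ \<beta>Q q countable_le_inf inf in blast)
    moreover have "ordLeq2 (card_of X) (card_of (B q))"
    proof (rule card_of_ordLeqI[of "\<lambda>x. SOME z. z \<in> \<beta> (q,x)"])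
      have ne: "\<exists>z. z \<in> \<beta> (q,x)" if xX: "x \<in> X" for x
      proof -
        obtain y where "\<beta> (q,x) = cmp f y" using \<beta>Q[OF q xX] unfolding Q_def by blast
        thus ?thesis using cmp_self[of y f] by auto
      qed
      have some: "(SOME z. z \<in> \<beta> (q,x)) \<in> \<beta> (q,x)" if "x \<in> X" for x by (rule someI_ex[OF ne[OF that]])
      show "inj_on (\<lambda>x. SOME z. z \<in> \<beta> (q,x)) X"
      proof (rule inj_onI)
        fix x x' assume x: "x \<in> X" "x' \<in> X" and e: "(SOME z. z \<in> \<beta> (q,x)) = (SOME z. z \<in> \<beta> (q,x'))"
        have "\<beta> (q,x) = \<beta> (q,x')" using Qdisj[OF \<beta>Q[OF q x(1)] \<beta>Q[OF q x(2)] some[OF x(1)]] some[OF x(2)] e by simp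
        thus "x = x'" using \<beta>inj q x by blast
      qed
      fix x assume "x \<in> X" thus "(SOME z. z \<in> \<beta> (q,x)) \<in> B q" using some unfolding B_def by blast
    qed
    ultimately show ?thesis by (rule ordIso_iff_ordLeq[THEN iffD2, OF conjI])
  qed
  have real: "realizable A w Al (B q) (\<lambda>n. f n \<inter> B q \<times> B q)" if q: "q \<in> Q" for q
  proof -
    obtain g where g: "bij_betw g X (B q)" using ordIso_symmetric[OF Bcard[OF q]] by (rule ordIso_bijE)
    have UB: "universal A w (Ialpha (B q) Al)" by (rule universal_transfer[OF U g])
    show ?thesis
    proof (rule universalD[OF UB], rule allI)
      fix n
      show "f n \<inter> B q \<times> B q \<in> Ialpha (B q) Al"
        by (rule restrict_Ialpha[OF spec[OF f, of n] Bsub[rule_format, OF q]])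
           (rule cmp_union_inv[OF closed[OF q]])
    qed
  qed
  define H where "H q = (SOME h. semigroup_hom A (Ialpha (B q) Al) h \<and> (\<forall>n. h (w n) = f n \<inter> B q \<times> B q))" for q
  have H: "semigroup_hom A (Ialpha (B q) Al) (H q) \<and> (\<forall>n. H q (w n) = f n \<inter> B q \<times> B q)" if q: "q \<in> Q" for q
    using real[OF q] unfolding H_def realizable_def by (rule someI_ex)
  have al': "Al = {} \<or> ordLeq2 (card_of Y) (card_of Al)"
    using al ordIso_imp_ordLeq[OF ordIso_symmetric, of "card_of Al" "card_of Y"] by blast
  have hom: "semigroup_hom A (Ialpha Y Al) (\<lambda>u. \<Union>q\<in>Q. H q u)"
    by (rule glue_hom[OF Bsub cover disj _ al']) (use H in blast)
  have wn: "(\<Union>q\<in>Q. H q (w n)) = f n" for n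
  proof -
    have "(\<Union>q\<in>Q. H q (w n)) = (\<Union>q\<in>Q. f n \<inter> B q \<times> B q)" using H by simp
    also have "\<dots> = f n"
    proof
      show "f n \<subseteq> (\<Union>q\<in>Q. f n \<inter> B q \<times> B q)"
      proof
        fix p assume p: "p \<in> f n"
        then obtain a b where ab: "p = (a,b)" "(a,b) \<in> f n" by (cases p) auto
        hence "a \<in> Y" using fsub by blast
        then obtain q where q: "q \<in> Q" "a \<in> B q" using cover by blast
        hence "b \<in> B q" using cmp_union_inv[OF closed[OF q(1)] ab(2)] by blast
        thus "p \<in> (\<Union>q\<in>Q. f n \<inter> B q \<times> B q)" using q ab by blast
      qed
    qed blast
    finally show ?thesis .
  qed
  show "realizable A w Al Y f" unfolding realizable_def using hom wn by blast
qed




lemma le_Plus: "infinite X \<Longrightarrow> ordLeq2 (card_of A) (card_of X) \<Longrightarrow> ordLeq2 (card_of B) (card_of X)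
  \<Longrightarrow> ordLeq2 (card_of (A <+> B)) (card_of X)"
  using ordLeq_ordIso_trans[OF card_of_Plus_mono card_of_Plus_infinite1[OF _ ord_refl]] by blast

lemma le_Un: "infinite X \<Longrightarrow> ordLeq2 (card_of A) (card_of X) \<Longrightarrow> ordLeq2 (card_of B) (card_of X)
  \<Longrightarrow> ordLeq2 (card_of (A \<union> B)) (card_of X)"
  using ordLeq_transitive[OF card_of_Un_Plus_ordLeq le_Plus] by blast

lemma sv_image_le:
  assumes "single_valued r" shows "ordLeq2 (card_of (r `` S)) (card_of S)"
proof -
  have "r `` S \<subseteq> (\<lambda>x. THE y. (x,y) \<in> r) ` S"
  proof
    fix y assume "y \<in> r `` S"
    then obtain x where x: "x \<in> S" "(x,y) \<in> r" by blast
    hence "(THE y. (x,y) \<in> r) = y" using assms unfolding single_valued_def by blast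
    thus "y \<in> (\<lambda>x. THE y. (x,y) \<in> r) ` S" using x by blast
  qed
  thus ?thesis using ordLeq_transitive[OF card_of_mono1 card_of_image] by blast
qed

lemma closure_exists:
  fixes V :: "('x + 'e \<times> 'z) set" and X :: "'q set"
  assumes h: "semigroup_hom A (Ialpha V Al) h" and V: "V = X0 <+> (EE \<times> C)"
    and A: "countable A" and inf: "infinite X" and X0: "ordLeq2 (card_of X0) (card_of X)"
    and C: "countable C" and E0: "E0 \<subseteq> EE" "ordLeq2 (card_of E0) (card_of X)"
  shows "\<exists>E. E0 \<subseteq> E \<and> E \<subseteq> EE \<and> ordLeq2 (card_of E) (card_of X) \<and>
     (\<forall>u p q. u \<noteq> [] \<and> set u \<subseteq> A \<and> (p,q) \<in> h u \<longrightarrow> (p \<in> X0 <+> E \<times> C \<longleftrightarrow> q \<in> X0 <+> E \<times> C))"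
proof -
  define W where "W = {u. u \<noteq> [] \<and> set u \<subseteq> A}"
  have cW: "countable W" using countable_subset[of W "lists A"] A unfolding W_def by auto
  have hW: "h u \<in> Ialpha V Al" if "u \<in> W" for u using shomD[OF h] that unfolding W_def by blast
  have hsub: "h u \<subseteq> V \<times> V" if "u \<in> W" for u using Ialpha_sub[OF hW[OF that]] .
  have hsv: "single_valued (h u) \<and> single_valued ((h u)\<inverse>)" if "u \<in> W" for u using Ialpha_sv[OF hW[OF that]] .
  define N where "N S = (\<Union>u\<in>W. h u `` S \<union> (h u)\<inverse> `` S)" for S
  define step where "step E = E \<union> {e. \<exists>c. Inr (e,c) \<in> N (X0 <+> E \<times> C)}" for E
  define En where "En n = (step ^^ n) E0" for n
  define Ei where "Ei = (\<Union>n. En n)"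
  have NV: "N S \<subseteq> V" for S unfolding N_def using hsub by blast
  have cardZ: "ordLeq2 (card_of (X0 <+> E \<times> C)) (card_of X)" if "ordLeq2 (card_of E) (card_of X)" for E
  proof -
    have "ordLeq2 (card_of (Sigma E (\<lambda>_. C))) (card_of X)"
      by (rule card_of_Sigma_ordLeq_infinite[OF inf that]) (use countable_le_inf[OF C inf] in blast)
    thus ?thesis using le_Plus[OF inf X0] by blast
  qed
  have cardN: "ordLeq2 (card_of (N S)) (card_of X)" if S: "ordLeq2 (card_of S) (card_of X)" for S
    unfolding N_def
  proof (rule card_of_UNION_ordLeq_infinite[OF inf countable_le_inf[OF cW inf]], rule ballI)
    fix u assume u: "u \<in> W"
    show "ordLeq2 (card_of (h u `` S \<union> (h u)\<inverse> `` S)) (card_of X)"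
      using le_Un[OF inf ordLeq_transitive[OF sv_image_le S] ordLeq_transitive[OF sv_image_le S]] hsv[OF u] by blast
  qed
  have cardStep: "ordLeq2 (card_of (step E)) (card_of X)" if E: "ordLeq2 (card_of E) (card_of X)" for E
  proof -
    have "{e. \<exists>c. Inr (e,c) \<in> N (X0 <+> E \<times> C)} \<subseteq> (\<lambda>p. fst (projr p)) ` N (X0 <+> E \<times> C)"
      by force
    hence "ordLeq2 (card_of {e. \<exists>c. Inr (e,c) \<in> N (X0 <+> E \<times> C)}) (card_of X)"
      using ordLeq_transitive[OF card_of_mono1 ordLeq_transitive[OF card_of_image cardN[OF cardZ[OF E]]]] by blast
    thus ?thesis unfolding step_def using le_Un[OF inf E] by blast
  qed
  have cardEn: "ordLeq2 (card_of (En n)) (card_of X)" for n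
    by (induction n) (simp_all add: En_def E0 cardStep)
  have cardEi: "ordLeq2 (card_of Ei) (card_of X)" unfolding Ei_def
    by (rule card_of_UNION_ordLeq_infinite[OF inf countable_le_inf[OF _ inf]]) (simp_all add: cardEn)
  have subEn: "En n \<subseteq> EE" for n
  proof (induction n)
    case 0 thus ?case using E0 by (simp add: En_def)
  next
    case (Suc n)
    have "{e. \<exists>c. Inr (e,c) \<in> N (X0 <+> En n \<times> C)} \<subseteq> EE" using NV unfolding V by blast
    thus ?case using Suc unfolding En_def step_def by simp
  qed
  have monoEn: "En n \<subseteq> En (Suc n)" for n unfolding En_def step_def by auto
  have stepEn: "{e. \<exists>c. Inr (e,c) \<in> N (X0 <+> En n \<times> C)} \<subseteq> En (Suc n)" for n
    unfolding En_def step_def by auto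
  have inv1: "q \<in> X0 <+> Ei \<times> C" if u: "u \<in> W" and p: "p \<in> X0 <+> Ei \<times> C" and pq: "(p,q) \<in> h u \<or> (q,p) \<in> h u" for u p q
  proof -
    obtain n where pn: "p \<in> X0 <+> En n \<times> C" using p unfolding Ei_def by blast
    have "q \<in> N (X0 <+> En n \<times> C)" using pq u pn unfolding N_def by blast
    moreover hence "q \<in> V" using NV by blast
    ultimately show ?thesis using stepEn[of n] unfolding V Ei_def by blast
  qed
  show ?thesis
  proof (intro exI conjI allI impI)
    show "E0 \<subseteq> Ei" unfolding Ei_def using En_def by (metis UN_upper UNIV_I funpow_0)
    show "Ei \<subseteq> EE" unfolding Ei_def using subEn by blast
    show "ordLeq2 (card_of Ei) (card_of X)" by (rule cardEi)
    fix u p q assume "u \<noteq> [] \<and> set u \<subseteq> A \<and> (p, q) \<in> h u"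
    hence "u \<in> W" "(p,q) \<in> h u" unfolding W_def by auto
    thus "(p \<in> X0 <+> Ei \<times> C) = (q \<in> X0 <+> Ei \<times> C)" using inv1 by blast
  qed
qed




lemma small_union:
  assumes inf: "infinite X" and nat: "ordLess2 (card_of (UNIV::nat set)) (card_of X)"
    and cI: "\<forall>c\<in>I. countable c" and I: "ordLess2 (card_of I) (card_of X)"
  shows "ordLess2 (card_of (\<Union>I)) (card_of X)"
proof -
  let ?B = "I <+> (UNIV::nat set)"
  have infB: "infinite ?B" by (simp add: infinite_UNIV_nat)
  have "ordLeq2 (card_of (\<Union>c\<in>I. c)) (card_of ?B)"
  proof (rule card_of_UNION_ordLeq_infinite[OF infB card_of_Plus1], rule ballI)
    fix c assume "c \<in> I"
    hence "countable c" using cI by blast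
    thus "ordLeq2 (card_of c) (card_of ?B)" using ordLeq_transitive[OF countable_le_nat card_of_Plus2] by blast
  qed
  moreover have "ordLess2 (card_of ?B) (card_of X)" by (rule card_of_Plus_ordLess_infinite[OF inf I nat])
  ultimately show ?thesis using ordLeq_ordLess_trans by simp
qed

lemma pigeon:
  fixes X :: "'x set" and Q :: "'x set set" and code :: "'x set \<Rightarrow> 'k"
  assumes reg: "regular_card X" and nat: "ordLess2 (card_of (UNIV::nat set)) (card_of X)"
    and K: "ordLess2 (card_of (UNIV::'k set)) (card_of X)"
    and cover: "\<Union>Q = X" and cQ: "\<forall>c\<in>Q. countable c"
    and bad: "ordLess2 (card_of {c\<in>Q. \<not> P c}) (card_of X)"
  shows "\<exists>\<tau>. ordLeq2 (card_of X) (card_of {c\<in>Q. P c \<and> code c = \<tau>})"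
proof (rule ccontr)
  assume "\<not> ?thesis"
  hence small: "ordLess2 (card_of {c\<in>Q. P c \<and> code c = \<tau>}) (card_of X)" for \<tau>
    using not_ordLeq_iff_ordLess[OF card_of_Well_order card_of_Well_order] by blast
  have inf: "infinite X" using reg unfolding regular_card_def by blast
  define U where "U \<tau> = \<Union>{c\<in>Q. P c \<and> code c = \<tau>}" for \<tau>
  define F where "F = insert (\<Union>{c\<in>Q. \<not> P c}) (U ` UNIV)"
  have "ordLeq2 (card_of (U ` UNIV)) (card_of (UNIV::'k set))" by (rule card_of_image)
  hence F1: "ordLess2 (card_of (U ` UNIV)) (card_of X)" using ordLeq_ordLess_trans K by blast
  have "ordLess2 (card_of {\<Union>{c\<in>Q. \<not> P c}}) (card_of X)"
    by (rule ordLeq_ordLess_trans[OF countable_le_nat nat]) simp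
  hence "ordLess2 (card_of ({\<Union>{c\<in>Q. \<not> P c}} \<union> U ` UNIV)) (card_of X)"
    using card_of_Un_ordLess_infinite[OF inf _ F1] by blast
  hence Fc: "ordLess2 (card_of F) (card_of X)" unfolding F_def by simp
  have Fm: "\<forall>B\<in>F. ordLess2 (card_of B) (card_of X)"
  proof
    fix B assume "B \<in> F"
    hence "B = \<Union>{c\<in>Q. \<not> P c} \<or> (\<exists>\<tau>. B = U \<tau>)" unfolding F_def by blast
    thus "ordLess2 (card_of B) (card_of X)"
    proof
      assume "B = \<Union>{c\<in>Q. \<not> P c}"
      thus ?thesis using small_union[OF inf nat _ bad] cQ by simp
    next
      assume "\<exists>\<tau>. B = U \<tau>"
      then obtain \<tau> where "B = U \<tau>" by blast
      thus ?thesis unfolding U_def using small_union[OF inf nat _ small[of \<tau>]] cQ by simp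
    qed
  qed
  have "\<Union>F = X"
  proof
    show "\<Union>F \<subseteq> X" unfolding F_def U_def using cover by blast
  next
    show "X \<subseteq> \<Union>F"
    proof
      fix x assume "x \<in> X"
      then obtain c where c: "c \<in> Q" "x \<in> c" using cover by blast
      show "x \<in> \<Union>F"
      proof (cases "P c")
        case True
        hence "x \<in> U (code c)" unfolding U_def using c by blast
        thus ?thesis unfolding F_def by blast
      next
        case False
        thus ?thesis unfolding F_def using c by blast
      qed
    qed
  qed
  thus False using reg Fc Fm unfolding regular_card_def by blast
qed

lemma conj_memE: "p \<in> cnj g r \<Longrightarrow> \<exists>x y. (x,y) \<in> r \<and> p = (g x, g y)"
  unfolding cnj_def by auto

definition code :: "(nat \<Rightarrow> 'x rel) \<Rightarrow> 'x set \<Rightarrow> (nat \<times> nat \<times> nat + nat) set" where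
  "code t c = Inr ` (to_nat_on c ` c) \<union>
     Inl ` {(n, to_nat_on c a, to_nat_on c b) | n a b. (a,b) \<in> t n \<and> a \<in> c \<and> b \<in> c}"

lemma code_iso:
  assumes cc: "countable c" and cc': "countable c'" and eq: "code t c = code t c'"
  shows "\<exists>\<iota>. bij_betw \<iota> c c' \<and> (\<forall>n. cnj \<iota> (t n \<inter> c \<times> c) = t n \<inter> c' \<times> c')"
proof -
  define e where "e = to_nat_on c"
  define e' where "e' = to_nat_on c'"
  have ie: "inj_on e c" unfolding e_def using cc by blast
  have ie': "inj_on e' c'" unfolding e'_def using cc' by blast
  define R where "R = {(n, e a, e b) | n a b. (a,b) \<in> t n \<and> a \<in> c \<and> b \<in> c}"
  define R' where "R' = {(n, e' a, e' b) | n a b. (a,b) \<in> t n \<and> a \<in> c' \<and> b \<in> c'}"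
  have eq2: "Inr ` (e ` c) \<union> Inl ` R = Inr ` (e' ` c') \<union> Inl ` R'"
    using eq unfolding code_def e_def e'_def R_def R'_def .
  have im: "e ` c = e' ` c'"
  proof -
    have "e ` c = {x. Inr x \<in> Inr ` (e ` c) \<union> Inl ` R}" by blast
    also have "\<dots> = {x. Inr x \<in> Inr ` (e' ` c') \<union> Inl ` R'}" using eq2 by simp
    also have "\<dots> = e' ` c'" by blast
    finally show ?thesis .
  qed
  have RR: "R = R'"
  proof -
    have "R = {x. Inl x \<in> Inr ` (e ` c) \<union> Inl ` R}" by blast
    also have "\<dots> = {x. Inl x \<in> Inr ` (e' ` c') \<union> Inl ` R'}" using eq2 by simp
    also have "\<dots> = R'" by blast
    finally show ?thesis .
  qed
  define \<iota> where "\<iota> = inv_into c' e' \<circ> e"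
  have b1: "bij_betw e c (e ` c)" using ie by (simp add: bij_betw_def)
  have b2: "bij_betw (inv_into c' e') (e ` c) c'" unfolding im using ie' by (simp add: bij_betw_inv_into inj_on_imp_bij_betw)
  have bij: "bij_betw \<iota> c c'" unfolding \<iota>_def using bij_betw_trans[OF b1 b2] .
  have ia: "\<iota> a = a'" if "a \<in> c" "a' \<in> c'" "e' a' = e a" for a a'
    unfolding \<iota>_def using that ie' by (metis comp_apply inv_into_f_f)
  have "cnj \<iota> (t n \<inter> c \<times> c) = t n \<inter> c' \<times> c'" for n
  proof
    show "cnj \<iota> (t n \<inter> c \<times> c) \<subseteq> t n \<inter> c' \<times> c'"
    proof
      fix p assume "p \<in> cnj \<iota> (t n \<inter> c \<times> c)"
      then obtain a b where ab: "(a,b) \<in> t n" "a \<in> c" "b \<in> c" "p = (\<iota> a, \<iota> b)" 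
        using conj_memE[of p \<iota>] by blast
      hence "(n, e a, e b) \<in> R'" unfolding RR[symmetric] R_def by blast
      then obtain a' b' where "(a',b') \<in> t n" "a' \<in> c'" "b' \<in> c'" "e' a' = e a" "e' b' = e b"
        unfolding R'_def by fastforce
      thus "p \<in> t n \<inter> c' \<times> c'" using ab ia by simp
    qed
  next
    show "t n \<inter> c' \<times> c' \<subseteq> cnj \<iota> (t n \<inter> c \<times> c)"
    proof
      fix p assume "p \<in> t n \<inter> c' \<times> c'"
      then obtain a' b' where ab: "(a',b') \<in> t n" "a' \<in> c'" "b' \<in> c'" "p = (a',b')" by blast
      hence "(n, e' a', e' b') \<in> R" unfolding RR R'_def by blast
      then obtain a b where "(a,b) \<in> t n" "a \<in> c" "b \<in> c" "e a = e' a'" "e b = e' b'"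
        unfolding R_def by fastforce
      moreover hence "\<iota> a = a'" "\<iota> b = b'" using ia ab by auto
      ultimately show "p \<in> cnj \<iota> (t n \<inter> c \<times> c)" using ab by (auto simp: conj_mem)
    qed
  qed
  thus ?thesis using bij by blast
qed

lemma code_type_small:
  "ordLeq2 (card_of (UNIV :: (nat \<times> nat \<times> nat + nat) set set)) (card_of (UNIV :: nat set set))"
proof (rule card_of_ordLeqI[of "\<lambda>S. to_nat ` S"])
  show "inj_on (\<lambda>S. to_nat ` S) (UNIV :: (nat \<times> nat \<times> nat + nat) set set)"
    by (rule inj_onI) (simp add: inj_image_eq_iff)
qed simp

lemma nat_small: "ordLeq2 (card_of (UNIV :: nat set)) (card_of (UNIV :: nat set set))"
  by (rule card_of_ordLeqI[of "\<lambda>n. {n}"]) (auto simp: inj_on_def)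




lemma pp_plus:
  assumes "partial_perm S1 r1" "partial_perm S2 r2"
  shows "partial_perm (S1 <+> S2) (cnj Inl r1 \<union> cnj Inr r2)"
proof -
  have s1: "single_valued r1" "single_valued (r1\<inverse>)" "r1 \<subseteq> S1 \<times> S1" using assms(1) unfolding partial_perm_def by auto
  have s2: "single_valued r2" "single_valued (r2\<inverse>)" "r2 \<subseteq> S2 \<times> S2" using assms(2) unfolding partial_perm_def by auto
  have sub: "cnj Inl r1 \<union> cnj Inr r2 \<subseteq> (S1 <+> S2) \<times> (S1 <+> S2)"
    using s1(3) s2(3) unfolding cnj_def by auto
  have sv: "single_valued (cnj Inl r1 \<union> cnj Inr r2)"
    unfolding single_valued_def
  proof (intro allI impI)
    fix a b c assume ab: "(a,b) \<in> cnj Inl r1 \<union> cnj Inr r2" and ac: "(a,c) \<in> cnj Inl r1 \<union> cnj Inr r2"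
    show "b = c"
    proof (cases a)
      case (Inl x)
      from ab obtain y where y: "(x,y) \<in> r1" "b = Inl y" unfolding Inl cnj_def by auto
      from ac obtain z where z: "(x,z) \<in> r1" "c = Inl z" unfolding Inl cnj_def by auto
      show ?thesis using y z s1(1) unfolding single_valued_def by auto
    next
      case (Inr x)
      from ab obtain y where y: "(x,y) \<in> r2" "b = Inr y" unfolding Inr cnj_def by auto
      from ac obtain z where z: "(x,z) \<in> r2" "c = Inr z" unfolding Inr cnj_def by auto
      show ?thesis using y z s2(1) unfolding single_valued_def by auto
    qed
  qed
  have sv2: "single_valued ((cnj Inl r1 \<union> cnj Inr r2)\<inverse>)"
    unfolding single_valued_def
  proof (intro allI impI)
    fix a b c assume ab: "(a,b) \<in> (cnj Inl r1 \<union> cnj Inr r2)\<inverse>" and ac: "(a,c) \<in> (cnj Inl r1 \<union> cnj Inr r2)\<inverse>"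
    show "b = c"
    proof (cases a)
      case (Inl x)
      from ab obtain y where y: "(y,x) \<in> r1" "b = Inl y" unfolding Inl cnj_def by auto
      from ac obtain z where z: "(z,x) \<in> r1" "c = Inl z" unfolding Inl cnj_def by auto
      show ?thesis using y z s1(2) unfolding single_valued_def by auto
    next
      case (Inr x)
      from ab obtain y where y: "(y,x) \<in> r2" "b = Inr y" unfolding Inr cnj_def by auto
      from ac obtain z where z: "(z,x) \<in> r2" "c = Inr z" unfolding Inr cnj_def by auto
      show ?thesis using y z s2(2) unfolding single_valued_def by auto
    qed
  qed
  show ?thesis unfolding partial_perm_def using sub sv sv2 by blast
qed

lemma conj_Inl_mem: "(Inl a, Inl b) \<in> cnj Inl r \<union> cnj Inr r' \<longleftrightarrow> (a,b) \<in> r"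
  unfolding cnj_def by auto
lemma conj_Inr_mem: "(Inr a, Inr b) \<in> cnj Inl r \<union> cnj Inr r' \<longleftrightarrow> (a,b) \<in> r'"
  unfolding cnj_def by auto
lemma conj_mixed1: "(Inl a, Inr b) \<notin> cnj Inl r \<union> cnj Inr r'"
  unfolding cnj_def by auto
lemma conj_mixed2: "(Inr a, Inl b) \<notin> cnj Inl r \<union> cnj Inr r'"
  unfolding cnj_def by auto




lemma assemble:
  fixes X :: "'x set" and Y :: "'y set" and Al :: "'c set" and t :: "nat \<Rightarrow> 'x rel"
    and K :: "'x set set" and \<iota> :: "'x set \<Rightarrow> 'x \<Rightarrow> 'x"
  assumes t: "\<forall>n. t n \<in> Ialpha X Al"
    and KQ: "K \<subseteq> cmp t ` X" and CK: "C \<in> K"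
    and iota: "\<forall>k\<in>K. bij_betw (\<iota> k) C k \<and> (\<forall>n. cnj (\<iota> k) (t n \<inter> C \<times> C) = t n \<inter> k \<times> k)"
    and Kc: "ordIso2 (card_of K) (card_of X)"
    and inf: "infinite X" and less: "ordLess2 (card_of X) (card_of Y)"
    and full: "(\<forall>n. C \<subseteq> Domain (t n) \<inter> Range (t n)) \<or> ordLeq2 (card_of Y) (card_of Al)"
    and UY: "universal A w (Ialpha Y Al)" and A: "countable A"
  shows "realizable A w Al X t"
proof -
  have tsub: "\<forall>n. t n \<subseteq> X \<times> X" using t Ialpha_sub by blast
  have tsv: "\<forall>n. single_valued (t n) \<and> single_valued ((t n)\<inverse>)" using t Ialpha_sv by blast
  have Kcmp: "\<exists>x\<in>X. k = cmp t x" if "k \<in> K" for k using KQ that by blast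
  have Kclosed: "cmp t z = k" if k: "k \<in> K" "z \<in> k" for k z
  proof -
    obtain x where "k = cmp t x" using Kcmp[OF k(1)] by blast
    thus ?thesis using cmp_eq[of z t x] k(2) by simp
  qed
  have Kdisj: "k = k'" if k: "k \<in> K" "k' \<in> K" "z \<in> k" "z \<in> k'" for k k' z
    using Kclosed[OF k(1,3)] Kclosed[OF k(2,4)] by simp
  have KX: "k \<subseteq> X" if k: "k \<in> K" for k
  proof -
    obtain x where "x \<in> X" "k = cmp t x" using Kcmp[OF k] by blast
    thus ?thesis using cmp_sub[OF tsub] by simp
  qed
  have Kcount: "countable k" if k: "k \<in> K" for k
  proof -
    obtain x where "k = cmp t x" using Kcmp[OF k] by blast
    thus ?thesis using cmp_countable[OF tsv] by simp
  qed
  define X0 where "X0 = X - \<Union>K"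
  have X0closed: "\<forall>x\<in>X0. cmp t x \<subseteq> X0"
  proof (intro ballI subsetI)
    fix x z assume x: "x \<in> X0" and z: "z \<in> cmp t x"
    have "z \<in> X" using cmp_sub[OF tsub] x z unfolding X0_def by blast
    moreover have "z \<notin> \<Union>K"
    proof
      assume "z \<in> \<Union>K"
      then obtain k where k: "k \<in> K" "z \<in> k" by blast
      hence "cmp t z = k" by (rule Kclosed)
      moreover have "cmp t z = cmp t x" using cmp_eq[OF z] .
      ultimately have "x \<in> k" using cmp_self[of x t] by simp
      thus False using x k(1) unfolding X0_def by blast
    qed
    ultimately show "z \<in> X0" unfolding X0_def by blast
  qed
  have Cclosed: "\<forall>x\<in>C. cmp t x \<subseteq> C" using Kclosed[OF CK] by blast
  have cC: "countable C" by (rule Kcount[OF CK])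
  have Cne: "C \<noteq> {}"
  proof -
    obtain x where "C = cmp t x" using Kcmp[OF CK] by blast
    thus ?thesis using cmp_self[of x t] by auto
  qed
  have X0X: "X0 \<subseteq> X" unfolding X0_def by blast
  have infY: "infinite Y" using card_of_ordLeq_finite[OF ordLess_imp_ordLeq[OF less]] inf by blast
  define EE where "EE = K <+> Y"
  define V where "V = X0 <+> (EE \<times> C)"
  have KY: "ordLeq2 (card_of K) (card_of Y)" using ordIso_ordLeq_trans[OF Kc ordLess_imp_ordLeq[OF less]] .
  have e1: "ordIso2 (card_of EE) (card_of Y)" unfolding EE_def using card_of_Plus_infinite[OF infY KY] by blast
  have infEE: "infinite EE" unfolding EE_def using infY by simp
  have e2: "ordIso2 (card_of (EE \<times> C)) (card_of EE)"
    using card_of_Times_infinite[OF infEE Cne countable_le_inf[OF cC infEE]] by blast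
  have infEC: "infinite (EE \<times> C)" using card_of_ordIso_finite[OF e2] infEE by blast
  have e21: "ordIso2 (card_of (EE \<times> C)) (card_of Y)" using ordIso_transitive[OF e2 e1] .
  have X0le: "ordLeq2 (card_of X0) (card_of (EE \<times> C))"
    using ordLeq_ordIso_trans[OF ordLeq_transitive[OF card_of_mono1[OF X0X] ordLess_imp_ordLeq[OF less]] ordIso_symmetric[OF e21]] .
  have e3: "ordIso2 (card_of V) (card_of (EE \<times> C))" unfolding V_def using card_of_Plus_infinite[OF infEC X0le] by blast
  have VY: "ordIso2 (card_of Y) (card_of V)" using ordIso_symmetric[OF ordIso_transitive[OF e3 e21]] .
  obtain g where g: "bij_betw g Y V" using VY by (rule ordIso_bijE)
  have UV: "universal A w (Ialpha V Al)" by (rule universal_transfer[OF UY g])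
  define P where "P n = {(a,b). fst a = fst b \<and> fst a \<in> EE \<and> (snd a, snd b) \<in> t n \<and> snd a \<in> C \<and> snd b \<in> C}" for n
  define s where "s n = cnj Inl (t n \<inter> X0 \<times> X0) \<union> cnj Inr (P n)" for n
  have Pmem: "((e,c),(e',c')) \<in> P n \<longleftrightarrow> e = e' \<and> e \<in> EE \<and> (c,c') \<in> t n \<and> c \<in> C \<and> c' \<in> C" for e c e' c' n
    unfolding P_def by simp
  have sV: "s n \<in> Ialpha V Al" for n
  proof -
    have pp1: "partial_perm X0 (t n \<inter> X0 \<times> X0)"
      using tsv unfolding partial_perm_def single_valued_def by blast
    have pp2: "partial_perm (EE \<times> C) (P n)"
      using tsv unfolding partial_perm_def single_valued_def P_def by auto
    have pp: "partial_perm V (s n)" unfolding V_def s_def by (rule pp_plus[OF pp1 pp2])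
    have dom: "ordLeq2 (card_of (V - Domain (s n))) (card_of Al)"
    proof (cases "\<forall>n. C \<subseteq> Domain (t n) \<inter> Range (t n)")
      case True
      have "V - Domain (s n) \<subseteq> Inl ` (X - Domain (t n))"
      proof
        fix p assume p: "p \<in> V - Domain (s n)"
        show "p \<in> Inl ` (X - Domain (t n))"
        proof (cases p)
          case (Inl x)
          hence x: "x \<in> X0" using p unfolding V_def by auto
          have "x \<notin> Domain (t n)"
          proof
            assume "x \<in> Domain (t n)"
            then obtain y where xy: "(x,y) \<in> t n" by blast
            hence "y \<in> X0" using cmp_union_inv[OF X0closed xy] x by blast
            hence "(Inl x, Inl y) \<in> s n" using xy x unfolding s_def conj_Inl_mem by blast
            thus False using p Inl by blast
          qed
          thus ?thesis using Inl x X0X by blast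
        next
          case (Inr ec)
          then obtain e c where ec: "p = Inr (e,c)" by (cases ec) auto
          hence ecV: "e \<in> EE" "c \<in> C" using p unfolding V_def by auto
          then obtain c' where cc: "(c,c') \<in> t n" using True by blast
          hence "c' \<in> C" using cmp_union_inv[OF Cclosed cc] ecV by blast
          hence "(Inr (e,c), Inr (e,c')) \<in> s n" using cc ecV unfolding s_def conj_Inr_mem Pmem by blast
          thus ?thesis using p ec by blast
        qed
      qed
      hence "ordLeq2 (card_of (V - Domain (s n))) (card_of (X - Domain (t n)))"
        using ordLeq_transitive[OF card_of_mono1 card_of_image] by blast
      moreover have "ordLeq2 (card_of (X - Domain (t n))) (card_of Al)" using t unfolding Ialpha_def by blast
      ultimately show ?thesis using ordLeq_transitive by blast
    next
      case False
      hence YA: "ordLeq2 (card_of Y) (card_of Al)" using full by blast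
      show ?thesis using ordLeq_transitive[OF card_of_mono1[of "V - Domain (s n)" V] ordLeq_transitive[OF ordIso_imp_ordLeq[OF ordIso_symmetric[OF VY]] YA]]
        by blast
    qed
    have ran: "ordLeq2 (card_of (V - Range (s n))) (card_of Al)"
    proof (cases "\<forall>n. C \<subseteq> Domain (t n) \<inter> Range (t n)")
      case True
      have "V - Range (s n) \<subseteq> Inl ` (X - Range (t n))"
      proof
        fix p assume p: "p \<in> V - Range (s n)"
        show "p \<in> Inl ` (X - Range (t n))"
        proof (cases p)
          case (Inl x)
          hence x: "x \<in> X0" using p unfolding V_def by auto
          have "x \<notin> Range (t n)"
          proof
            assume "x \<in> Range (t n)"
            then obtain y where xy: "(y,x) \<in> t n" by blast
            hence "y \<in> X0" using cmp_union_inv[OF X0closed xy] x by blast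
            hence "(Inl y, Inl x) \<in> s n" using xy x unfolding s_def conj_Inl_mem by blast
            thus False using p Inl by blast
          qed
          thus ?thesis using Inl x X0X by blast
        next
          case (Inr ec)
          then obtain e c where ec: "p = Inr (e,c)" by (cases ec) auto
          hence ecV: "e \<in> EE" "c \<in> C" using p unfolding V_def by auto
          then obtain c' where cc: "(c',c) \<in> t n" using True by blast
          hence "c' \<in> C" using cmp_union_inv[OF Cclosed cc] ecV by blast
          hence "(Inr (e,c'), Inr (e,c)) \<in> s n" using cc ecV unfolding s_def conj_Inr_mem Pmem by blast
          thus ?thesis using p ec by blast
        qed
      qed
      hence "ordLeq2 (card_of (V - Range (s n))) (card_of (X - Range (t n)))"
        using ordLeq_transitive[OF card_of_mono1 card_of_image] by blast
      moreover have "ordLeq2 (card_of (X - Range (t n))) (card_of Al)" using t unfolding Ialpha_def by blast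
      ultimately show ?thesis using ordLeq_transitive by blast
    next
      case False
      hence YA: "ordLeq2 (card_of Y) (card_of Al)" using full by blast
      show ?thesis using ordLeq_transitive[OF card_of_mono1[of "V - Range (s n)" V] ordLeq_transitive[OF ordIso_imp_ordLeq[OF ordIso_symmetric[OF VY]] YA]]
        by blast
    qed
    show ?thesis unfolding Ialpha_def using pp dom ran by blast
  qed
  obtain h where h: "semigroup_hom A (Ialpha V Al) h" "\<forall>n. h (w n) = s n"
    using universalD[OF UV, of s] sV unfolding realizable_def by blast
  have E0: "Inl ` K \<subseteq> EE" unfolding EE_def by blast
  have E0c: "ordLeq2 (card_of (Inl ` K :: ('x set + 'y) set)) (card_of X)"
    using ordLeq_transitive[OF card_of_image ordIso_imp_ordLeq[OF Kc]] .
  have X0c: "ordLeq2 (card_of X0) (card_of X)" using card_of_mono1[OF X0X] .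
  obtain E where E: "Inl ` K \<subseteq> E" "E \<subseteq> EE" "ordLeq2 (card_of E) (card_of X)"
    and Einv: "\<forall>u p q. u \<noteq> [] \<and> set u \<subseteq> A \<and> (p,q) \<in> h u \<longrightarrow> (p \<in> X0 <+> E \<times> C \<longleftrightarrow> q \<in> X0 <+> E \<times> C)"
    using closure_exists[OF h(1) V_def A inf X0c cC E0 E0c] by blast
  define Z where "Z = X0 <+> E \<times> C"
  have ZV: "Z \<subseteq> V" using E(2) unfolding Z_def V_def by auto
  have homZ: "semigroup_hom A (Ialpha Z Al) (\<lambda>u. h u \<inter> Z \<times> Z)"
    by (rule restrict_hom[OF h(1) ZV]) (use Einv in \<open>unfold Z_def, blast\<close>)
  have realZ: "realizable A w Al Z (\<lambda>n. s n \<inter> Z \<times> Z)" unfolding realizable_def using homZ h(2) by auto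
  have EK: "ordIso2 (card_of E) (card_of K)"
  proof -
    have "ordLeq2 (card_of E) (card_of K)" using ordLeq_ordIso_trans[OF E(3) ordIso_symmetric[OF Kc]] .
    moreover have "ordLeq2 (card_of K) (card_of E)" by (rule card_of_ordLeqI[of Inl]) (use E(1) in auto)
    ultimately show ?thesis by (rule ordIso_iff_ordLeq[THEN iffD2, OF conjI])
  qed
  obtain \<sigma> where \<sigma>: "bij_betw \<sigma> E K" using EK by (rule ordIso_bijE)
  have \<sigma>K: "\<sigma> e \<in> K" if "e \<in> E" for e using \<sigma> that unfolding bij_betw_def by blast
  have \<sigma>inj: "e = e'" if "e \<in> E" "e' \<in> E" "\<sigma> e = \<sigma> e'" for e e' using \<sigma> that unfolding bij_betw_def inj_on_def by blast
  have \<sigma>surj: "\<exists>e\<in>E. k = \<sigma> e" if "k \<in> K" for k using \<sigma> that unfolding bij_betw_def by blast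
  have \<iota>b: "bij_betw (\<iota> k) C k" if "k \<in> K" for k using iota that by blast
  have \<iota>c: "cnj (\<iota> k) (t n \<inter> C \<times> C) = t n \<inter> k \<times> k" if "k \<in> K" for k n using iota that by blast
  have \<iota>in: "\<iota> k c \<in> k" if "k \<in> K" "c \<in> C" for k c using \<iota>b[OF that(1)] that(2) unfolding bij_betw_def by blast
  have \<iota>inj: "c = c'" if "k \<in> K" "c \<in> C" "c' \<in> C" "\<iota> k c = \<iota> k c'" for k c c'
    using \<iota>b[OF that(1)] that(2-4) unfolding bij_betw_def inj_on_def by blast
  have \<iota>surj: "\<exists>c\<in>C. x = \<iota> k c" if "k \<in> K" "x \<in> k" for k x using \<iota>b[OF that(1)] that(2) unfolding bij_betw_def by blast
  define \<phi> where "\<phi> p = (case p of Inl x \<Rightarrow> x | Inr ec \<Rightarrow> \<iota> (\<sigma> (fst ec)) (snd ec))" for p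
  have \<phi>l: "\<phi> (Inl x) = x" for x unfolding \<phi>_def by simp
  have \<phi>r: "\<phi> (Inr (e,c)) = \<iota> (\<sigma> e) c" for e c unfolding \<phi>_def by simp
  have ZInl: "Inl x \<in> Z \<longleftrightarrow> x \<in> X0" for x unfolding Z_def by auto
  have ZInr: "Inr (e,c) \<in> Z \<longleftrightarrow> e \<in> E \<and> c \<in> C" for e c unfolding Z_def by auto
  have X0K: "x \<notin> k" if "x \<in> X0" "k \<in> K" for x k using that unfolding X0_def by blast
  have bij\<phi>: "bij_betw \<phi> Z X"
    unfolding bij_betw_def
  proof
    show "inj_on \<phi> Z"
    proof (rule inj_onI)
      fix p q assume p: "p \<in> Z" and q: "q \<in> Z" and eq: "\<phi> p = \<phi> q"
      show "p = q"
      proof (cases p)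
        case (Inl x)
        hence x: "x \<in> X0" using p ZInl by simp
        show ?thesis
        proof (cases q)
          case (Inl y) thus ?thesis using eq \<open>p = Inl x\<close> \<phi>l by simp
        next
          case (Inr ec)
          then obtain e c where ec: "q = Inr (e,c)" by (cases ec) auto
          hence "e \<in> E" "c \<in> C" using q ZInr by auto
          hence "\<phi> q \<in> \<sigma> e" "\<sigma> e \<in> K" using \<phi>r ec \<iota>in \<sigma>K by auto
          moreover have "\<phi> p = x" using Inl \<phi>l by simp
          ultimately show ?thesis using X0K[OF x] eq by metis
        qed
      next
        case (Inr ec)
        then obtain e c where ec: "p = Inr (e,c)" by (cases ec) auto
        hence ecZ: "e \<in> E" "c \<in> C" using p ZInr by auto
        hence pin: "\<phi> p \<in> \<sigma> e" "\<sigma> e \<in> K" using \<phi>r ec \<iota>in \<sigma>K by auto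
        show ?thesis
        proof (cases q)
          case (Inl y)
          hence y: "y \<in> X0" using q ZInl by simp
          have "\<phi> q = y" using Inl \<phi>l by simp
          thus ?thesis using X0K[OF y pin(2)] eq pin(1) by metis
        next
          case (Inr ec')
          then obtain e' c' where ec': "q = Inr (e',c')" by (cases ec') auto
          hence ecZ': "e' \<in> E" "c' \<in> C" using q ZInr by auto
          hence qin: "\<phi> q \<in> \<sigma> e'" "\<sigma> e' \<in> K" using \<phi>r ec' \<iota>in \<sigma>K by auto
          have "\<sigma> e = \<sigma> e'" using Kdisj[OF pin(2) qin(2) pin(1)] qin(1) eq by simp
          hence ee: "e = e'" using \<sigma>inj ecZ ecZ' by blast
          hence "\<iota> (\<sigma> e) c = \<iota> (\<sigma> e) c'" using eq ec ec' \<phi>r by simp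
          hence "c = c'" using \<iota>inj[OF pin(2) ecZ(2) ecZ'(2)] by simp
          thus ?thesis using ec ec' ee by simp
        qed
      qed
    qed
  next
    show "\<phi> ` Z = X"
    proof
      show "\<phi> ` Z \<subseteq> X"
      proof
        fix x assume "x \<in> \<phi> ` Z"
        then obtain p where p: "p \<in> Z" "x = \<phi> p" by blast
        show "x \<in> X"
        proof (cases p)
          case (Inl y) thus ?thesis using p ZInl \<phi>l X0X by auto
        next
          case (Inr ec)
          then obtain e c where ec: "p = Inr (e,c)" by (cases ec) auto
          hence "e \<in> E" "c \<in> C" using p ZInr by auto
          hence "x \<in> \<sigma> e" "\<sigma> e \<in> K" using p ec \<phi>r \<iota>in \<sigma>K by auto
          thus ?thesis using KX by blast
        qed
      qed
    next
      show "X \<subseteq> \<phi> ` Z"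
      proof
        fix x assume x: "x \<in> X"
        show "x \<in> \<phi> ` Z"
        proof (cases "x \<in> X0")
          case True
          hence "Inl x \<in> Z" using ZInl by simp
          thus ?thesis using \<phi>l[of x] by (metis image_eqI)
        next
          case False
          then obtain k where k: "k \<in> K" "x \<in> k" using x unfolding X0_def by blast
          obtain e where e: "e \<in> E" "k = \<sigma> e" using \<sigma>surj[OF k(1)] by blast
          obtain c where c: "c \<in> C" "x = \<iota> k c" using \<iota>surj[OF k] by blast
          have "Inr (e,c) \<in> Z" using ZInr e c by simp
          moreover have "\<phi> (Inr (e,c)) = x" using \<phi>r e c by simp
          ultimately show ?thesis by (metis image_eqI)
        qed
      qed
    qed
  qed
  have EEE: "e \<in> EE" if "e \<in> E" for e using E(2) that by blast
  have wn: "cnj \<phi> (s n \<inter> Z \<times> Z) = t n" for n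
  proof
    show "cnj \<phi> (s n \<inter> Z \<times> Z) \<subseteq> t n"
    proof
      fix p assume "p \<in> cnj \<phi> (s n \<inter> Z \<times> Z)"
      then obtain a b where ab: "(a,b) \<in> s n" "a \<in> Z" "b \<in> Z" "p = (\<phi> a, \<phi> b)"
        using conj_memE[of p \<phi>] by blast
      show "p \<in> t n"
      proof (cases a)
        case (Inl x)
        show ?thesis
        proof (cases b)
          case (Inl y)
          hence "(Inl x, Inl y) \<in> s n" using ab \<open>a = Inl x\<close> by simp
          hence "(x,y) \<in> t n" unfolding s_def conj_Inl_mem by blast
          thus ?thesis using ab \<open>a = Inl x\<close> Inl \<phi>l by simp
        next
          case (Inr y)
          hence "(Inl x, Inr y) \<in> s n" using ab \<open>a = Inl x\<close> by simp
          hence False using conj_mixed1[where a=x and b=y and r="t n \<inter> X0 \<times> X0" and r'="P n"] unfolding s_def by simp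
          thus ?thesis ..
        qed
      next
        case (Inr ec)
        then obtain e c where ec: "a = Inr (e,c)" by (cases ec) auto
        show ?thesis
        proof (cases b)
          case (Inl y)
          hence "(Inr (e,c), Inl y) \<in> s n" using ab ec by simp
          hence False using conj_mixed2[where a="(e,c)" and b=y and r="t n \<inter> X0 \<times> X0" and r'="P n"] unfolding s_def by simp
          thus ?thesis ..
        next
          case (Inr ec')
          then obtain e' c' where ec': "b = Inr (e',c')" by (cases ec') auto
          have "(Inr (e,c), Inr (e',c')) \<in> s n" using ab ec ec' by simp
          hence "((e,c),(e',c')) \<in> P n" unfolding s_def conj_Inr_mem by blast
          hence pp: "e' = e" "(c,c') \<in> t n" "c \<in> C" "c' \<in> C" using Pmem by auto
          have eE: "e \<in> E" using ab(2) ec ZInr by simp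
          have "map_prod (\<iota> (\<sigma> e)) (\<iota> (\<sigma> e)) (c,c') \<in> map_prod (\<iota> (\<sigma> e)) (\<iota> (\<sigma> e)) ` (t n \<inter> C \<times> C)"
            by (rule imageI) (use pp in blast)
          hence "(\<iota> (\<sigma> e) c, \<iota> (\<sigma> e) c') \<in> cnj (\<iota> (\<sigma> e)) (t n \<inter> C \<times> C)" unfolding cnj_def by simp
          hence "(\<iota> (\<sigma> e) c, \<iota> (\<sigma> e) c') \<in> t n" using \<iota>c[OF \<sigma>K[OF eE]] by blast
          thus ?thesis using ab(4) ec ec' pp(1) \<phi>r by simp
        qed
      qed
    qed
  next
    show "t n \<subseteq> cnj \<phi> (s n \<inter> Z \<times> Z)"
    proof
      fix p assume p: "p \<in> t n"
      then obtain x y where xy: "p = (x,y)" "(x,y) \<in> t n" by (cases p) auto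
      have xX: "x \<in> X" using xy tsub by blast
      show "p \<in> cnj \<phi> (s n \<inter> Z \<times> Z)"
      proof (cases "x \<in> X0")
        case True
        hence yX0: "y \<in> X0" using cmp_union_inv[OF X0closed xy(2)] by blast
        have "(Inl x, Inl y) \<in> s n" unfolding s_def conj_Inl_mem using True yX0 xy by blast
        hence "(Inl x, Inl y) \<in> s n \<inter> Z \<times> Z" using True yX0 ZInl by simp
        hence "map_prod \<phi> \<phi> (Inl x, Inl y) \<in> map_prod \<phi> \<phi> ` (s n \<inter> Z \<times> Z)" by (rule imageI)
        thus ?thesis unfolding cnj_def using xy \<phi>l by simp
      next
        case False
        then obtain k where k: "k \<in> K" "x \<in> k" using xX unfolding X0_def by blast
        have "cmp t x = k" by (rule Kclosed[OF k])
        hence yk: "y \<in> k" using cmp_step[of x y t n, OF xy(2)] by simp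
        have "(x,y) \<in> cnj (\<iota> k) (t n \<inter> C \<times> C)" unfolding \<iota>c[OF k(1)] using xy k yk by blast
        then obtain c c' where "(c,c') \<in> t n \<inter> C \<times> C" "x = \<iota> k c" "y = \<iota> k c'"
          unfolding conj_mem by blast
        hence cc: "(c,c') \<in> t n" "c \<in> C" "c' \<in> C" "x = \<iota> k c" "y = \<iota> k c'" by auto
        obtain e where e: "e \<in> E" "k = \<sigma> e" using \<sigma>surj[OF k(1)] by blast
        have "((e,c),(e,c')) \<in> P n" using Pmem cc EEE[OF e(1)] by simp
        hence "(Inr (e,c), Inr (e,c')) \<in> s n" unfolding s_def conj_Inr_mem by blast
        hence "(Inr (e,c), Inr (e,c')) \<in> s n \<inter> Z \<times> Z" using ZInr e cc by simp
        hence "map_prod \<phi> \<phi> (Inr (e,c), Inr (e,c')) \<in> map_prod \<phi> \<phi> ` (s n \<inter> Z \<times> Z)" by (rule imageI)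
        thus ?thesis unfolding cnj_def using xy \<phi>r cc e by simp
      qed
    qed
  qed
  show ?thesis using realizable_iso[OF realZ bij\<phi>] wn by simp
qed




lemma part_ii:
  fixes X :: "'x set" and Y :: "'y set" and Al :: "'c set"
  assumes big: "ordLess2 (card_of (UNIV :: nat set set)) (card_of X)" and less: "ordLess2 (card_of X) (card_of Y)"
    and reg: "regular_card X"
    and al: "ordLess2 (card_of Al) (card_of X) \<or> ordLeq2 (card_of Y) (card_of Al)"
    and A: "countable A" and UY: "universal A w (Ialpha Y Al)"
  shows "universal A w (Ialpha X Al)"
proof (rule universalI)
  fix t :: "nat \<Rightarrow> 'x rel" assume t: "\<forall>n. t n \<in> Ialpha X Al"
  have inf: "infinite X" using reg unfolding regular_card_def by blast
  have nat: "ordLess2 (card_of (UNIV::nat set)) (card_of X)" using ordLeq_ordLess_trans[OF nat_small big] .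
  have Kty: "ordLess2 (card_of (UNIV :: (nat \<times> nat \<times> nat + nat) set set)) (card_of X)"
    using ordLeq_ordLess_trans[OF code_type_small big] .
  have tsub: "\<forall>n. t n \<subseteq> X \<times> X" using t Ialpha_sub by blast
  have tsv: "\<forall>n. single_valued (t n) \<and> single_valued ((t n)\<inverse>)" using t Ialpha_sv by blast
  define Q where "Q = cmp t ` X"
  have cQ: "\<forall>c\<in>Q. countable c" unfolding Q_def using cmp_countable[OF tsv] by blast
  have Qsub: "c \<subseteq> X" if c: "c \<in> Q" for c
  proof -
    obtain y where "c = cmp t y" "y \<in> X" using c unfolding Q_def by blast
    thus ?thesis using cmp_sub[OF tsub] by simp
  qed
  have Qdisj: "c = c'" if c: "c \<in> Q" "c' \<in> Q" "z \<in> c" "z \<in> c'" for c c' z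
  proof -
    obtain y y' where "c = cmp t y" "c' = cmp t y'" using c unfolding Q_def by blast
    thus ?thesis using cmp_disj[of z t y y'] c by simp
  qed
  have Qne: "\<exists>x. x \<in> c" if c: "c \<in> Q" for c
  proof -
    obtain y where "c = cmp t y" using c unfolding Q_def by blast
    thus ?thesis using cmp_self[of y t] by blast
  qed
  have cover: "\<Union>Q = X"
  proof
    show "\<Union>Q \<subseteq> X" using Qsub by blast
    show "X \<subseteq> \<Union>Q"
    proof
      fix x assume "x \<in> X"
      hence "cmp t x \<in> Q" unfolding Q_def by blast
      thus "x \<in> \<Union>Q" using cmp_self[of x t] by blast
    qed
  qed
  define P where "P c = ((\<forall>n. c \<subseteq> Domain (t n) \<inter> Range (t n)) \<or> ordLeq2 (card_of Y) (card_of Al))" for c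
  have inj_pick: "ordLeq2 (card_of S) (card_of T)"
    if S: "S \<subseteq> Q" and ST: "\<forall>c\<in>S. \<exists>x. x \<in> c \<inter> T" for S T
  proof (rule card_of_ordLeqI[of "\<lambda>c. SOME x. x \<in> c \<inter> T"])
    have some: "(SOME x. x \<in> c \<inter> T) \<in> c \<inter> T" if "c \<in> S" for c using someI_ex ST that by metis
    show "inj_on (\<lambda>c. SOME x. x \<in> c \<inter> T) S"
    proof (rule inj_onI)
      fix c c' assume c: "c \<in> S" "c' \<in> S" and e: "(SOME x. x \<in> c \<inter> T) = (SOME x. x \<in> c' \<inter> T)"
      have "(SOME x. x \<in> c \<inter> T) \<in> c" "(SOME x. x \<in> c \<inter> T) \<in> c'" using some[OF c(1)] some[OF c(2)] e by auto
      thus "c = c'" using Qdisj c S by blast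
    qed
    fix c assume "c \<in> S" thus "(SOME x. x \<in> c \<inter> T) \<in> T" using some by blast
  qed
  have bad: "ordLess2 (card_of {c\<in>Q. \<not> P c}) (card_of X)"
  proof (cases "ordLeq2 (card_of Y) (card_of Al)")
    case True
    hence e: "{c\<in>Q. \<not> P c} = {}" unfolding P_def by blast
    show ?thesis unfolding e by (rule ordLeq_ordLess_trans[OF card_of_empty nat])
  next
    case False
    hence alX: "ordLess2 (card_of Al) (card_of X)" using al by blast
    define Bd where "Bd = (\<Union>n. (X - Domain (t n)) \<union> (X - Range (t n)))"
    have infB: "infinite (Al <+> (UNIV::nat set))" by (simp add: infinite_UNIV_nat)
    have "ordLeq2 (card_of Bd) (card_of (Al <+> (UNIV::nat set)))"
      unfolding Bd_def
    proof (rule card_of_UNION_ordLeq_infinite[OF infB card_of_Plus2], rule ballI)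
      fix n :: nat
      have "ordLeq2 (card_of (X - Domain (t n))) (card_of Al)" "ordLeq2 (card_of (X - Range (t n))) (card_of Al)"
        using t unfolding Ialpha_def by blast+
      thus "ordLeq2 (card_of ((X - Domain (t n)) \<union> (X - Range (t n)))) (card_of (Al <+> (UNIV::nat set)))"
        using le_Un[OF infB ordLeq_transitive[OF _ card_of_Plus1] ordLeq_transitive[OF _ card_of_Plus1]] by blast
    qed
    hence Bdc: "ordLess2 (card_of Bd) (card_of X)"
      using ordLeq_ordLess_trans[OF _ card_of_Plus_ordLess_infinite[OF inf alX nat]] by blast
    have "ordLeq2 (card_of {c\<in>Q. \<not> P c}) (card_of Bd)"
    proof (rule inj_pick)
      show "{c\<in>Q. \<not> P c} \<subseteq> Q" by blast
      show "\<forall>c\<in>{c\<in>Q. \<not> P c}. \<exists>x. x \<in> c \<inter> Bd"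
      proof
        fix c assume c: "c \<in> {c\<in>Q. \<not> P c}"
        then obtain n x where "x \<in> c" "x \<notin> Domain (t n) \<inter> Range (t n)" unfolding P_def by blast
        moreover hence "x \<in> X" using Qsub c by blast
        ultimately show "\<exists>x. x \<in> c \<inter> Bd" unfolding Bd_def by blast
      qed
    qed
    thus ?thesis using ordLeq_ordLess_trans[OF _ Bdc] by blast
  qed
  obtain \<tau> where \<tau>: "ordLeq2 (card_of X) (card_of {c\<in>Q. P c \<and> code t c = \<tau>})"
    using pigeon[OF reg nat Kty cover cQ bad, of "code t"] by blast
  define K where "K = {c\<in>Q. P c \<and> code t c = \<tau>}"
  have KQ: "K \<subseteq> cmp t ` X" unfolding K_def Q_def by blast
  have "ordLeq2 (card_of K) (card_of X)"
  proof (rule inj_pick)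
    show "K \<subseteq> Q" unfolding K_def by blast
    show "\<forall>c\<in>K. \<exists>x. x \<in> c \<inter> X"
    proof
      fix c assume "c \<in> K"
      hence c: "c \<in> Q" unfolding K_def by blast
      obtain x where "x \<in> c" using Qne[OF c] by blast
      thus "\<exists>x. x \<in> c \<inter> X" using Qsub[OF c] by blast
    qed
  qed
  hence Kc: "ordIso2 (card_of K) (card_of X)" using \<tau> unfolding K_def[symmetric]
    by (rule ordIso_iff_ordLeq[THEN iffD2, OF conjI])
  have Kne: "K \<noteq> {}"
  proof
    assume "K = {}"
    hence "X = {}" using \<tau> card_of_empty3 unfolding K_def[symmetric] by auto
    thus False using inf by simp
  qed
  define C where "C = (SOME c. c \<in> K)"
  have CK: "C \<in> K" unfolding C_def using Kne by (simp add: some_in_eq)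
  have isoex: "\<exists>\<iota>. bij_betw \<iota> C k \<and> (\<forall>n. cnj \<iota> (t n \<inter> C \<times> C) = t n \<inter> k \<times> k)" if k: "k \<in> K" for k
  proof (rule code_iso)
    show "countable C" using CK cQ unfolding K_def by blast
    show "countable k" using k cQ unfolding K_def by blast
    show "code t C = code t k" using CK k unfolding K_def by simp
  qed
  define \<iota> where "\<iota> k = (SOME \<iota>. bij_betw \<iota> C k \<and> (\<forall>n. cnj \<iota> (t n \<inter> C \<times> C) = t n \<inter> k \<times> k))" for k
  have iota: "\<forall>k\<in>K. bij_betw (\<iota> k) C k \<and> (\<forall>n. cnj (\<iota> k) (t n \<inter> C \<times> C) = t n \<inter> k \<times> k)"
  proof
    fix k assume "k \<in> K"
    thus "bij_betw (\<iota> k) C k \<and> (\<forall>n. cnj (\<iota> k) (t n \<inter> C \<times> C) = t n \<inter> k \<times> k)"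
      unfolding \<iota>_def by (rule someI_ex[OF isoex])
  qed
  have full: "(\<forall>n. C \<subseteq> Domain (t n) \<inter> Range (t n)) \<or> ordLeq2 (card_of Y) (card_of Al)"
    using CK unfolding K_def P_def by blast
  show "realizable A w Al X t" by (rule assemble[OF t KQ CK iota Kc inf less full UY A])
qed


theorem theorem2p1:
  fixes X :: "'x set" and Y :: "'y set" and Al :: "'c set"
  assumes alpha: "infinite Al \<or> Al = {}"
  shows
   "(infinite X \<and> ordLess2 (card_of X) (card_of Y)
       \<and> (Al = {} \<or> ordIso2 (card_of Al) (card_of Y))
     \<longrightarrow> (\<forall>(A :: 'a set) w. countable A \<and> word_seq A w \<and> universal A w (Ialpha X Al)
              \<longrightarrow> universal A w (Ialpha Y Al)))
    \<and>
    (ordLess2 (card_of (UNIV :: nat set set)) (card_of X) \<and> ordLess2 (card_of X) (card_of Y)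
       \<and> regular_card X
       \<and> (ordLess2 (card_of Al) (card_of X) \<or> ordLeq2 (card_of Y) (card_of Al))
     \<longrightarrow> (\<forall>(A :: 'b set) w. countable A \<and> word_seq A w \<and> universal A w (Ialpha Y Al)
              \<longrightarrow> universal A w (Ialpha X Al)))"
proof (rule conjI)
  show "infinite X \<and> ordLess2 (card_of X) (card_of Y)
       \<and> (Al = {} \<or> ordIso2 (card_of Al) (card_of Y))
     \<longrightarrow> (\<forall>(A :: 'a set) w. countable A \<and> word_seq A w \<and> universal A w (Ialpha X Al)
              \<longrightarrow> universal A w (Ialpha Y Al))"
  proof (intro impI allI)
    fix A :: "'a set" and w
    assume H: "infinite X \<and> ordLess2 (card_of X) (card_of Y) \<and> (Al = {} \<or> ordIso2 (card_of Al) (card_of Y))"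
      and G: "countable A \<and> word_seq A w \<and> universal A w (Ialpha X Al)"
    from H have h1: "infinite X" and h2: "ordLess2 (card_of X) (card_of Y)"
      and h3: "Al = {} \<or> ordIso2 (card_of Al) (card_of Y)" by auto
    from G have g: "universal A w (Ialpha X Al)" by auto
    show "universal A w (Ialpha Y Al)" by (rule part_i[OF h1 h2 h3 g])
  qed
next
  show "ordLess2 (card_of (UNIV :: nat set set)) (card_of X) \<and> ordLess2 (card_of X) (card_of Y)
       \<and> regular_card X
       \<and> (ordLess2 (card_of Al) (card_of X) \<or> ordLeq2 (card_of Y) (card_of Al))
     \<longrightarrow> (\<forall>(A :: 'b set) w. countable A \<and> word_seq A w \<and> universal A w (Ialpha Y Al)
              \<longrightarrow> universal A w (Ialpha X Al))"
  proof (intro impI allI)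
    fix A :: "'b set" and w
    assume H: "ordLess2 (card_of (UNIV :: nat set set)) (card_of X) \<and> ordLess2 (card_of X) (card_of Y)
       \<and> regular_card X \<and> (ordLess2 (card_of Al) (card_of X) \<or> ordLeq2 (card_of Y) (card_of Al))"
      and G: "countable A \<and> word_seq A w \<and> universal A w (Ialpha Y Al)"
    from H have h1: "ordLess2 (card_of (UNIV :: nat set set)) (card_of X)" and h2: "ordLess2 (card_of X) (card_of Y)"
      and h3: "regular_card X" and h4: "ordLess2 (card_of Al) (card_of X) \<or> ordLeq2 (card_of Y) (card_of Al)" by auto
    from G have g1: "countable A" and g2: "universal A w (Ialpha Y Al)" by auto
    show "universal A w (Ialpha X Al)" by (rule part_ii[OF h1 h2 h3 h4 g1 g2])
  qed
qed

end
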